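(* Let $B$ be a commutative Noetherian ring, $A=B[y]$, $r\ge3$, and let $b=b(y)=(b_1,\ldots,b_{-1})^t$ be in $\mathrm{IUm}_{2r}A$ (resp. $\mathrm{IUm}_{2r+1}A$). Let $s\in B\cap\langle b_1,\ldots,b_{r-1}\rangle$, the ideal being taken in $A$. Then there exists $m\in\mathbb{N}$ such that, with $z$ a new indeterminate, $$b(y+s^mz)\in EO(2r,A[z])^{\le r(r-1)/2+8r-4}\,b(y)\quad\text{resp.}\quad b(y+s^mz)\in EO(2r+1,A[z])^{\le r(r-1)/2+9r-5}\,b(y).$$
   Context: All rings are commutative with $1$. For a ring $R$: $O(2r,R)$ is the group of automorphisms of $R^{2r}$ preserving $q(x)=\sum_{i=1}^r x_ix_{-i}$, coordinates indexed by the basis $e_1,\ldots,e_r,e_{-r},\ldots,e_{-1}$ in this order; $O(2r+1,R)$ is the group of automorphisms of $R^{2r+1}$ with basis $e_1,\ldots,e_r,e_0,e_{-r},\ldots,e_{-1}$ preserving $q(x)=x_0^2+\sum_{i=1}^r x_ix_{-i}$. With $e$ the identity matrix and $e_{i,j}$ matrix units, elementary orthogonal transvections are $T_{i,j}(\xi)=e+\xi e_{i,j}-\xi e_{-j,-i}$ ($\xi\in R$, $i,j\in\{\pm1,\ldots,\pm r\}$, $i\ne\pm j$), and in the odd case also $T_{i,0}(\xi)=e+2\xi e_{i,0}-\xi e_{0,-i}-\xi^2e_{i,-i}$. $EO(m,R)^{\le N}$ is the set of products of at most $N$ elementary orthogonal transvections, and $EO(m,R)^{\le N}b=\{gb:g\in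 EO(m,R)^{\le N}\}$. $\mathrm{IUm}_{2r}R=\{b\in R^{2r}: b\text{ unimodular}, q(b)=0\}$, $\mathrm{IUm}_{2r+1}R=\{b\in R^{2r+1}:(b_1,\ldots,b_r,2b_0,b_{-r},\ldots,b_{-1})\text{ unimodular}, q(b)=0\}$. $b(y+s^mz)$ denotes the column obtained by substituting $y+s^mz$ for $y$ in each entry. *)

theory Defs
  imports "HOL-Computational_Algebra.Polynomial"
begin

definition is_ideal :: "'a::comm_ring_1 set \<Rightarrow> bool" where
  "is_ideal I \<longleftrightarrow> 0 \<in> I \<and> (\<forall>x\<in>I. \<forall>y\<in>I. x + y \<in> I) \<and> (\<forall>a. \<forall>x\<in>I. a * x \<in> I)"

definition ideal_gen :: "'a::comm_ring_1 set \<Rightarrow> 'a set" where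
  "ideal_gen F = {x. \<exists>G c. finite G \<and> G \<subseteq> F \<and> x = (\<Sum>g\<in>G. c g * g)}"

definition noetherian :: "'a::comm_ring_1 itself \<Rightarrow> bool" where
  "noetherian _ \<longleftrightarrow> (\<forall>I::'a set. is_ideal I \<longrightarrow> (\<exists>F. finite F \<and> I = ideal_gen F))"

definition idx_even :: "nat \<Rightarrow> int set" where
  "idx_even r = {i. 1 \<le> \<bar>i\<bar> \<and> \<bar>i\<bar> \<le> int r}"

definition idx_odd :: "nat \<Rightarrow> int set" where
  "idx_odd r = {i. \<bar>i\<bar> \<le> int r}"

type_synonym 'a mat = "int \<Rightarrow> int \<Rightarrow> 'a"
type_synonym 'a vec = "int \<Rightarrow> 'a"

definition idm :: "'a::comm_ring_1 mat" where
  "idm i j = (if i = j then 1 else 0)"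

definition unit_mat :: "int \<Rightarrow> int \<Rightarrow> 'a::comm_ring_1 mat" where
  "unit_mat k l i j = (if i = k \<and> j = l then 1 else 0)"

definition mat_mult :: "int set \<Rightarrow> 'a::comm_ring_1 mat \<Rightarrow> 'a mat \<Rightarrow> 'a mat" where
  "mat_mult I M N i j = (\<Sum>k\<in>I. M i k * N k j)"

definition mat_vec :: "int set \<Rightarrow> 'a::comm_ring_1 mat \<Rightarrow> 'a vec \<Rightarrow> 'a vec" where
  "mat_vec I M v i = (\<Sum>k\<in>I. M i k * v k)"

definition transv :: "int \<Rightarrow> int \<Rightarrow> 'a::comm_ring_1 \<Rightarrow> 'a mat" where
  "transv i j \<xi> = (\<lambda>a b. idm a b + \<xi> * unit_mat i j a b - \<xi> * unit_mat (-j) (-i) a b)"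

definition transv0 :: "int \<Rightarrow> 'a::comm_ring_1 \<Rightarrow> 'a mat" where
  "transv0 i \<xi> = (\<lambda>a b. idm a b + 2 * \<xi> * unit_mat i 0 a b - \<xi> * unit_mat 0 (-i) a b
                        - \<xi>^2 * unit_mat i (-i) a b)"

definition EO_gens_even :: "nat \<Rightarrow> 'a::comm_ring_1 mat set" where
  "EO_gens_even r = {transv i j \<xi> | i j \<xi>. i \<in> idx_even r \<and> j \<in> idx_even r \<and> i \<noteq> j \<and> i \<noteq> -j}"

definition EO_gens_odd :: "nat \<Rightarrow> 'a::comm_ring_1 mat set" where
  "EO_gens_odd r = EO_gens_even r \<union> {transv0 i \<xi> | i \<xi>. i \<in> idx_even r}"

definition EO_le :: "int set \<Rightarrow> 'a::comm_ring_1 mat set \<Rightarrow> nat \<Rightarrow> 'a mat set" where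
  "EO_le I gens N = {foldr (mat_mult I) ts idm | ts. length ts \<le> N \<and> set ts \<subseteq> gens}"

definition EO_le_even :: "nat \<Rightarrow> nat \<Rightarrow> 'a::comm_ring_1 mat set" where
  "EO_le_even r N = EO_le (idx_even r) (EO_gens_even r) N"

definition EO_le_odd :: "nat \<Rightarrow> nat \<Rightarrow> 'a::comm_ring_1 mat set" where
  "EO_le_odd r N = EO_le (idx_odd r) (EO_gens_odd r) N"

definition unimodular :: "int set \<Rightarrow> 'a::comm_ring_1 vec \<Rightarrow> bool" where
  "unimodular I v \<longleftrightarrow> (\<exists>c. (\<Sum>i\<in>I. c i * v i) = 1)"

definition q_even :: "nat \<Rightarrow> 'a::comm_ring_1 vec \<Rightarrow> 'a" where
  "q_even r x = (\<Sum>i=1..int r. x i * x (-i))"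

definition q_odd :: "nat \<Rightarrow> 'a::comm_ring_1 vec \<Rightarrow> 'a" where
  "q_odd r x = x 0 ^ 2 + (\<Sum>i=1..int r. x i * x (-i))"

definition IUm_even :: "nat \<Rightarrow> 'a::comm_ring_1 vec set" where
  "IUm_even r = {b. unimodular (idx_even r) b \<and> q_even r b = 0}"

definition IUm_odd :: "nat \<Rightarrow> 'a::comm_ring_1 vec set" where
  "IUm_odd r = {b. unimodular (idx_odd r) (\<lambda>i. if i = 0 then 2 * b 0 else b i) \<and> q_odd r b = 0}"

text \<open>A = B[y] is 'b poly; A[z] is 'b poly poly with outer variable z.
  For p(y) in B[y], subst_yz s m p is p(y + s^m z) in B[y][z].\<close>
definition subst_yz :: "'b::comm_ring_1 \<Rightarrow> nat \<Rightarrow> 'b poly \<Rightarrow> 'b poly poly" where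
  "subst_yz s m p = poly (map_poly (\<lambda>c. [:[:c:]:]) p) ([:[:0, 1:]:] + [:0, [:s ^ m:]:])"

end

theory Submission
  imports Defs
begin

definition dotp :: "nat \<Rightarrow> ('a::comm_ring_1) vec \<Rightarrow> 'a vec \<Rightarrow> 'a" where
  "dotp r x y = (\<Sum>j\<in>{1..int r}. x j * y j)"
definition dotn :: "nat \<Rightarrow> ('a::comm_ring_1) vec \<Rightarrow> 'a vec \<Rightarrow> 'a" where
  "dotn r x y = (\<Sum>j\<in>{1..int r}. x j * y (-j))"
definition dl :: "int \<Rightarrow> ('a::comm_ring_1) vec" where
  "dl l = (\<lambda>k. if k = l then 1 else 0)"

definition Lev :: "nat \<Rightarrow> ('a::comm_ring_1) vec \<Rightarrow> 'a vec \<Rightarrow> 'a vec \<Rightarrow> 'a vec" where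
  "Lev r p q v = (\<lambda>k. if 1 \<le> k \<and> k \<le> int r then v k + p k * dotp r q v
      else if - int r \<le> k \<and> k \<le> -1 then v k - q (-k) * dotn r p v else v k)"

lemma Lev_apply: "Lev r p q v k = (if 1 \<le> k \<and> k \<le> int r then v k + p k * dotp r q v
      else if - int r \<le> k \<and> k \<le> -1 then v k - q (-k) * dotn r p v else v k)"
  by (simp add: Lev_def)

lemma dotp_commute: "dotp r x y = dotp r y x"
  by (simp add: dotp_def mult.commute)

lemma dotp_add_left[simp]: "dotp r (\<lambda>k. x k + y k) z = dotp r x z + dotp r y z"
  by (simp add: dotp_def algebra_simps sum.distrib)
lemma dotp_add_right[simp]: "dotp r z (\<lambda>k. x k + y k) = dotp r z x + dotp r z y"
  by (simp add: dotp_def algebra_simps sum.distrib)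
lemma dotp_diff_left[simp]: "dotp r (\<lambda>k. x k - y k) z = dotp r x z - dotp r y z"
  by (simp add: dotp_def algebra_simps sum_subtractf)
lemma dotp_diff_right[simp]: "dotp r z (\<lambda>k. x k - y k) = dotp r z x - dotp r z y"
  by (simp add: dotp_def algebra_simps sum_subtractf)
lemma dotp_uminus_left[simp]: "dotp r (\<lambda>k. - x k) z = - dotp r x z"
  by (simp add: dotp_def sum_negf)
lemma dotp_uminus_right[simp]: "dotp r z (\<lambda>k. - x k) = - dotp r z x"
  by (simp add: dotp_def sum_negf)
lemma dotp_smult_left[simp]: "dotp r (\<lambda>k. c * x k) z = c * dotp r x z"
  by (simp add: dotp_def sum_distrib_left algebra_simps)
lemma dotp_smult_right[simp]: "dotp r z (\<lambda>k. c * x k) = c * dotp r z x"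
  by (simp add: dotp_def sum_distrib_left algebra_simps)

lemma dotn_add_left[simp]: "dotn r (\<lambda>k. x k + y k) z = dotn r x z + dotn r y z"
  by (simp add: dotn_def algebra_simps sum.distrib)
lemma dotn_uminus_left[simp]: "dotn r (\<lambda>k. - x k) z = - dotn r x z"
  by (simp add: dotn_def sum_negf)
lemma dotn_smult_left[simp]: "dotn r (\<lambda>k. c * x k) z = c * dotn r x z"
  by (simp add: dotn_def sum_distrib_left algebra_simps)

lemma dl_apply: "dl l k = (if k = l then 1 else 0)"
  by (simp add: dl_def)
lemma dotp_dl_left[simp]: "1 \<le> l \<Longrightarrow> l \<le> int r \<Longrightarrow> dotp r (dl l) v = v l"
proof -
  assume a: "1 \<le> l" "l \<le> int r"
  have "dotp r (dl l) v = (\<Sum>j\<in>{1..int r}. if j = l then v j else 0)"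
    unfolding dotp_def by (rule sum.cong) (auto simp: dl_apply)
  then show ?thesis using a by simp
qed
lemma dotp_dl_right[simp]: "1 \<le> l \<Longrightarrow> l \<le> int r \<Longrightarrow> dotp r v (dl l) = v l"
  using dotp_dl_left dotp_commute by metis
lemma dotn_dl_left[simp]: "1 \<le> l \<Longrightarrow> l \<le> int r \<Longrightarrow> dotn r (dl l) v = v (-l)"
proof -
  assume a: "1 \<le> l" "l \<le> int r"
  have "dotn r (dl l) v = (\<Sum>j\<in>{1..int r}. if j = l then v (-j) else 0)"
    unfolding dotn_def by (rule sum.cong) (auto simp: dl_apply)
  then show ?thesis using a by simp
qed

lemma dotp_Lev[simp]: "dotp r x (Lev r p q v) = dotp r x v + dotp r x p * dotp r q v"
proof -
  have "dotp r x (Lev r p q v) = (\<Sum>j\<in>{1..int r}. x j * v j + x j * p j * dotp r q v)"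
    unfolding dotp_def[of r x] by (rule sum.cong) (auto simp: Lev_apply algebra_simps)
  also have "\<dots> = dotp r x v + dotp r x p * dotp r q v"
    by (simp add: dotp_def[of r x] sum.distrib sum_distrib_right)
  finally show ?thesis .
qed

lemma dotn_Lev[simp]: "dotn r x (Lev r p q v) = dotn r x v - dotp r x q * dotn r p v"
proof -
  have "dotn r x (Lev r p q v) = (\<Sum>j\<in>{1..int r}. x j * v (-j) - x j * q j * dotn r p v)"
    unfolding dotn_def[of r x] by (rule sum.cong) (auto simp: Lev_apply algebra_simps)
  also have "\<dots> = dotn r x v - dotp r x q * dotn r p v"
    by (simp add: dotn_def[of r x] dotp_def[of r x] sum_subtractf sum_distrib_right)
  finally show ?thesis .
qed

lemma Lev_comp_p:
  assumes "dotp r q p = 0" "dotp r q p' = 0"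
  shows "Lev r p q (Lev r p' q v) = Lev r (\<lambda>k. p k + p' k) q v"
  using assms by (auto simp: fun_eq_iff Lev_apply algebra_simps dotp_commute[of r p q])

lemma Lev_comp_q:
  assumes "dotp r q p = 0" "dotp r q' p = 0"
  shows "Lev r p q (Lev r p q' v) = Lev r p (\<lambda>k. q k + q' k) v"
  using assms by (auto simp: fun_eq_iff Lev_apply algebra_simps dotp_commute[of r p])

lemma Lev_smult: "Lev r (\<lambda>k. c * p k) q v = Lev r p (\<lambda>k. c * q k) v"
  by (auto simp: fun_eq_iff Lev_apply algebra_simps)

lemma dotp_cong: "(\<And>k. 1 \<le> k \<Longrightarrow> k \<le> int r \<Longrightarrow> x k = x' k) \<Longrightarrow> dotp r x y = dotp r x' y"
  unfolding dotp_def by (rule sum.cong) auto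
lemma dotp_cong2: "(\<And>k. 1 \<le> k \<Longrightarrow> k \<le> int r \<Longrightarrow> y k = y' k) \<Longrightarrow> dotp r x y = dotp r x y'"
  unfolding dotp_def by (rule sum.cong) auto
lemma dotn_cong: "(\<And>k. 1 \<le> k \<Longrightarrow> k \<le> int r \<Longrightarrow> x k = x' k) \<Longrightarrow> dotn r x y = dotn r x' y"
  unfolding dotn_def by (rule sum.cong) auto

lemma Lev_cong:
  assumes "\<And>k. 1 \<le> k \<Longrightarrow> k \<le> int r \<Longrightarrow> p k = p' k" "\<And>k. 1 \<le> k \<Longrightarrow> k \<le> int r \<Longrightarrow> q k = q' k"
  shows "Lev r p q v = Lev r p' q' v"
proof -
  have "dotp r q v = dotp r q' v" by (rule dotp_cong) (simp add: assms)
  moreover have "dotn r p v = dotn r p' v" by (rule dotn_cong) (simp add: assms)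
  ultimately show ?thesis using assms by (auto simp: fun_eq_iff Lev_apply)
qed

lemma Lev_commutator:
  assumes l: "1 \<le> l" "l \<le> int r" and pl: "p l = 0" and ql: "q l = 0" and qp: "dotp r q p = 0"
  shows "Lev r p (dl l) (Lev r (dl l) q (Lev r (\<lambda>k. - p k) (dl l) (Lev r (dl l) (\<lambda>k. - q k) v)))
       = Lev r p q v"
proof -
  define v1 where "v1 = Lev r (dl l) (\<lambda>k. - q k) v"
  define v2 where "v2 = Lev r (\<lambda>k. - p k) (dl l) v1"
  define v3 where "v3 = Lev r (dl l) q v2"
  have pq: "dotp r p q = 0" using qp dotp_commute by metis
  have e1: "dotp r (dl l) v1 = v l - dotp r q v" "dotp r q v1 = dotp r q v"
     "dotn r p v1 = dotn r p v" "dotn r (dl l) v1 = v (-l)"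
    using l pl ql pq by (simp_all add: v1_def dl_apply)
  have e2: "dotp r (dl l) v2 = v l - dotp r q v" "dotp r q v2 = dotp r q v"
     "dotn r p v2 = dotn r p v" "dotn r (dl l) v2 = v (-l) + dotn r p v"
    using l pl ql pq qp e1 by (simp_all add: v2_def dl_apply)
  have e3: "dotp r (dl l) v3 = v l" "dotn r p v3 = dotn r p v"
    using l pl ql pq qp e2 by (simp_all add: v3_def dl_apply)
  show ?thesis
    unfolding v1_def[symmetric] v2_def[symmetric] v3_def[symmetric]
    apply (rule ext)
    apply (simp only: Lev_apply e3)
    apply (simp only: v3_def Lev_apply e2)
    apply (simp only: v2_def Lev_apply e1)
    apply (simp only: v1_def Lev_apply)
    using l pq by (auto simp: dl_apply algebra_simps)
qed

definition agree :: "int set \<Rightarrow> ('a::comm_ring_1) vec \<Rightarrow> 'a vec \<Rightarrow> bool" where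
  "agree I u v \<longleftrightarrow> (\<forall>k\<in>I. u k = v k)"

definition ap :: "int set \<Rightarrow> ('a::comm_ring_1) mat list \<Rightarrow> 'a vec \<Rightarrow> 'a vec" where
  "ap I ts v = foldr (mat_vec I) ts v"

lemma mat_vec_mult: "finite I \<Longrightarrow> mat_vec I (mat_mult I M N) v = mat_vec I M (mat_vec I N v)"
proof (rule ext)
  fix i
  have "mat_vec I (mat_mult I M N) v i = (\<Sum>k\<in>I. \<Sum>l\<in>I. M i l * N l k * v k)"
    by (simp add: mat_vec_def mat_mult_def sum_distrib_right)
  also have "\<dots> = (\<Sum>l\<in>I. \<Sum>k\<in>I. M i l * N l k * v k)" by (rule sum.swap)
  also have "\<dots> = mat_vec I M (mat_vec I N v) i"
    by (simp add: mat_vec_def sum_distrib_left mult.assoc)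
  finally show "mat_vec I (mat_mult I M N) v i = mat_vec I M (mat_vec I N v) i" .
qed

lemma mat_vec_foldr: "finite I \<Longrightarrow>
  mat_vec I (foldr (mat_mult I) ts idm) v = foldr (mat_vec I) ts (mat_vec I idm v)"
  by (induction ts) (simp_all add: mat_vec_mult)

lemma mat_vec_agree: "agree I v v' \<Longrightarrow> mat_vec I M v = mat_vec I M v'"
  unfolding agree_def mat_vec_def by (simp add: fun_eq_iff)

lemma ap_agree: "agree I v v' \<Longrightarrow> agree I (ap I ts v) (ap I ts v')"
proof (induction ts)
  case Nil then show ?case by (simp add: ap_def)
next
  case (Cons t ts)
  then have "mat_vec I t (ap I ts v) = mat_vec I t (ap I ts v')" by (intro mat_vec_agree) simp
  then show ?case by (simp add: ap_def agree_def)
qed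

lemma mat_vec_idm: "finite I \<Longrightarrow> agree I (mat_vec I idm v) v"
proof -
  assume f: "finite I"
  { fix k assume k: "k \<in> I"
    have "mat_vec I idm v k = (\<Sum>l\<in>I. if l = k then v l else 0)"
      unfolding mat_vec_def by (rule sum.cong) (auto simp: idm_def)
    also have "\<dots> = v k" using f k by simp
    finally have "mat_vec I idm v k = v k" . }
  then show ?thesis by (simp add: agree_def)
qed

lemma agree_sym: "agree I u v \<Longrightarrow> agree I v u" by (simp add: agree_def)
lemma agree_trans: "agree I u v \<Longrightarrow> agree I v w \<Longrightarrow> agree I u w" by (simp add: agree_def)

lemma foldr_ap: "finite I \<Longrightarrow> agree I (mat_vec I (foldr (mat_mult I) ts idm) v) (ap I ts v)"
proof -
  assume f: "finite I"
  have "agree I (ap I ts (mat_vec I idm v)) (ap I ts v)" by (rule ap_agree[OF mat_vec_idm[OF f]])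
  then show ?thesis using mat_vec_foldr[OF f, of ts v] by (simp add: ap_def)
qed

lemma ap_append: "ap I (xs @ ys) v = ap I xs (ap I ys v)"
  by (simp add: ap_def)

lemma sum_delta_lemma: "finite I \<Longrightarrow> (\<Sum>l\<in>I. (if l = a then f l else 0)) = (if a \<in> I then f a else 0)"
  by simp

lemma mv_transv:
  assumes "finite I" "j \<in> I" "-i \<in> I" "k \<in> I"
  shows "mat_vec I (transv i j \<xi>) v k = v k + (if k = i then \<xi> * v j else 0) - (if k = -j then \<xi> * v (-i) else 0)"
proof -
  have "mat_vec I (transv i j \<xi>) v k = (\<Sum>l\<in>I. (if l = k then v l else 0) + (if l = j then (if k = i then \<xi> * v l else 0) else 0)
        - (if l = -i then (if k = -j then \<xi> * v l else 0) else 0))"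
    unfolding mat_vec_def transv_def by (rule sum.cong) (auto simp: idm_def unit_mat_def algebra_simps)
  also have "\<dots> = v k + (if k = i then \<xi> * v j else 0) - (if k = -j then \<xi> * v (-i) else 0)"
    using assms by (simp add: sum.distrib sum_subtractf)
  finally show ?thesis .
qed

lemma mv_transv0:
  assumes "finite I" "0 \<in> I" "-i \<in> I" "k \<in> I"
  shows "mat_vec I (transv0 i \<xi>) v k = v k + (if k = i then 2 * \<xi> * v 0 - \<xi>^2 * v (-i) else 0) - (if k = 0 then \<xi> * v (-i) else 0)"
proof -
  have "mat_vec I (transv0 i \<xi>) v k = (\<Sum>l\<in>I. (if l = k then v l else 0) + (if l = 0 then (if k = i then 2 * \<xi> * v l else 0) else 0)
        - (if l = -i then (if k = 0 then \<xi> * v l else 0) else 0) - (if l = -i then (if k = i then \<xi>^2 * v l else 0) else 0))"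
    unfolding mat_vec_def transv0_def by (rule sum.cong) (auto simp: idm_def unit_mat_def algebra_simps)
  also have "\<dots> = v k + (if k = i then 2 * \<xi> * v 0 - \<xi>^2 * v (-i) else 0) - (if k = 0 then \<xi> * v (-i) else 0)"
    using assms by (simp add: sum.distrib sum_subtractf)
  finally show ?thesis .
qed

definition goodI :: "nat \<Rightarrow> int set \<Rightarrow> bool" where
  "goodI r I \<longleftrightarrow> finite I \<and> (\<forall>k. 1 \<le> k \<and> k \<le> int r \<longrightarrow> k \<in> I \<and> -k \<in> I) \<and> (\<forall>k\<in>I. \<bar>k\<bar> \<le> int r)"

lemma goodI_even: "goodI r (idx_even r)"
proof -
  have "finite (idx_even r)" by (rule finite_subset[of _ "{-int r..int r}"]) (auto simp: idx_even_def)
  then show ?thesis by (auto simp: goodI_def idx_even_def)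
qed
lemma goodI_odd: "goodI r (idx_odd r)"
proof -
  have "finite (idx_odd r)" by (rule finite_subset[of _ "{-int r..int r}"]) (auto simp: idx_odd_def)
  then show ?thesis by (auto simp: goodI_def idx_odd_def)
qed

definition Sieg :: "nat \<Rightarrow> (int \<Rightarrow> int \<Rightarrow> 'a::comm_ring_1) \<Rightarrow> 'a vec \<Rightarrow> 'a vec" where
  "Sieg r S v = (\<lambda>k. if - int r \<le> k \<and> k \<le> -1 then v k + (\<Sum>j\<in>{1..int r}. S (-k) j * v j) else v k)"

lemma Sieg_apply: "Sieg r S v k = (if - int r \<le> k \<and> k \<le> -1 then v k + (\<Sum>j\<in>{1..int r}. S (-k) j * v j) else v k)"
  by (simp add: Sieg_def)

definition R0 :: "nat \<Rightarrow> ('a::comm_ring_1) vec \<Rightarrow> 'a vec \<Rightarrow> 'a vec" where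
  "R0 r \<xi> v = (\<lambda>k. if k = 0 then v 0 - dotp r \<xi> v else if - int r \<le> k \<and> k \<le> -1
      then v k + 2 * \<xi> (-k) * v 0 - \<xi> (-k) * dotp r \<xi> v else v k)"

lemma R0_apply: "R0 r \<xi> v k = (if k = 0 then v 0 - dotp r \<xi> v else if - int r \<le> k \<and> k \<le> -1
      then v k + 2 * \<xi> (-k) * v 0 - \<xi> (-k) * dotp r \<xi> v else v k)"
  by (simp add: R0_def)

lemma Sieg_sum_eq: "(\<And>j. 1 \<le> j \<Longrightarrow> j \<le> int r \<Longrightarrow> v j = v' j) \<Longrightarrow>
   (\<Sum>j\<in>{1..int r}. S a j * v j) = (\<Sum>j\<in>{1..int r}. S a j * v' j)"
  by (rule sum.cong) auto

lemma dotp_Sieg[simp]: "dotp r x (Sieg r S v) = dotp r x v"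
  unfolding dotp_def by (rule sum.cong) (auto simp: Sieg_apply)

lemma dotp_R0[simp]: "dotp r x (R0 r \<xi> v) = dotp r x v"
  unfolding dotp_def by (rule sum.cong) (auto simp: R0_apply)

lemma Sieg_add: "Sieg r S (Sieg r S' v) = Sieg r (\<lambda>a b. S a b + S' a b) v"
proof -
  have "\<And>a. (\<Sum>j\<in>{1..int r}. S a j * Sieg r S' v j) = (\<Sum>j\<in>{1..int r}. S a j * v j)"
    by (rule Sieg_sum_eq) (simp add: Sieg_apply)
  then show ?thesis by (auto simp: fun_eq_iff Sieg_apply algebra_simps sum.distrib)
qed

lemma Sieg_cong: "(\<And>a b. 1 \<le> a \<Longrightarrow> a \<le> int r \<Longrightarrow> 1 \<le> b \<Longrightarrow> b \<le> int r \<Longrightarrow> S a b = S' a b) \<Longrightarrow>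
  Sieg r S v = Sieg r S' v"
  unfolding Sieg_def by (auto simp: fun_eq_iff intro!: sum.cong)

lemma R0_Sieg: "R0 r \<xi> (Sieg r S v) = Sieg r S (R0 r \<xi> v)"
proof -
  have "\<And>a. (\<Sum>j\<in>{1..int r}. S a j * R0 r \<xi> v j) = (\<Sum>j\<in>{1..int r}. S a j * v j)"
    by (rule Sieg_sum_eq) (simp add: R0_apply)
  then show ?thesis by (auto simp: fun_eq_iff Sieg_apply R0_apply algebra_simps)
qed

lemma R0_comp: "R0 r \<xi> (R0 r \<eta> v) = Sieg r (\<lambda>a b. \<eta> a * \<xi> b - \<xi> a * \<eta> b) (R0 r (\<lambda>k. \<xi> k + \<eta> k) v)"
proof -
  have h: "\<And>a. (\<Sum>j\<in>{1..int r}. (\<eta> a * \<xi> j - \<xi> a * \<eta> j) * R0 r (\<lambda>k. \<xi> k + \<eta> k) v j)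
     = \<eta> a * dotp r \<xi> v - \<xi> a * dotp r \<eta> v"
  proof -
    fix a
    have "(\<Sum>j\<in>{1..int r}. (\<eta> a * \<xi> j - \<xi> a * \<eta> j) * R0 r (\<lambda>k. \<xi> k + \<eta> k) v j)
      = (\<Sum>j\<in>{1..int r}. \<eta> a * (\<xi> j * v j) - \<xi> a * (\<eta> j * v j))"
      by (rule sum.cong) (auto simp: R0_apply algebra_simps)
    then show "?thesis a" by (simp add: dotp_def sum_subtractf sum_distrib_left)
  qed
  show ?thesis
    apply (rule ext)
    apply (simp only: Sieg_apply h)
    by (auto simp: R0_apply algebra_simps)
qed

lemma Lev_zero: "Lev r (\<lambda>k. 0) q v = v"
  by (simp add: fun_eq_iff Lev_apply dotn_def)
lemma Lev_zero2: "Lev r p (\<lambda>k. 0) v = v"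
  by (simp add: fun_eq_iff Lev_apply dotp_def)

lemma agree_Lev: "goodI r I \<Longrightarrow> agree I v v' \<Longrightarrow> agree I (Lev r p q v) (Lev r p q v')"
proof -
  assume g: "goodI r I" and a: "agree I v v'"
  have "dotp r q v = dotp r q v'" using g a unfolding goodI_def agree_def by (intro dotp_cong2) auto
  moreover have "dotn r p v = dotn r p v'" using g a unfolding goodI_def agree_def dotn_def by (intro sum.cong) auto
  ultimately show ?thesis using a by (auto simp: agree_def Lev_apply)
qed

lemma agree_Sieg: "goodI r I \<Longrightarrow> agree I v v' \<Longrightarrow> agree I (Sieg r S v) (Sieg r S v')"
proof -
  assume g: "goodI r I" and a: "agree I v v'"
  have "\<And>x. (\<Sum>j\<in>{1..int r}. S x j * v j) = (\<Sum>j\<in>{1..int r}. S x j * v' j)"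
    using g a unfolding goodI_def agree_def by (intro Sieg_sum_eq) auto
  then show ?thesis using a by (auto simp: agree_def Sieg_apply)
qed

lemma agree_R0: "goodI r I \<Longrightarrow> 0 \<in> I \<Longrightarrow> agree I v v' \<Longrightarrow> agree I (R0 r \<xi> v) (R0 r \<xi> v')"
proof -
  assume g: "goodI r I" and z: "0 \<in> I" and a: "agree I v v'"
  have "dotp r \<xi> v = dotp r \<xi> v'" using g a unfolding goodI_def agree_def by (intro dotp_cong2) auto
  moreover have "v 0 = v' 0" using a z by (simp add: agree_def)
  ultimately show ?thesis using a by (auto simp: agree_def R0_apply)
qed

lemma T_Lev:
  assumes g: "goodI r I" and ij: "1 \<le> i" "i \<le> int r" "1 \<le> j" "j \<le> int r" "i \<noteq> j"
  shows "agree I (mat_vec I (transv i j \<xi>) v) (Lev r (\<lambda>x. \<xi> * dl i x) (dl j) v)"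
proof -
  have f: "finite I" and m: "j \<in> I" "-i \<in> I" and b: "\<And>k. k \<in> I \<Longrightarrow> \<bar>k\<bar> \<le> int r"
    using g ij unfolding goodI_def by auto
  show ?thesis unfolding agree_def
  proof
    fix k assume k: "k \<in> I"
    have e: "mat_vec I (transv i j \<xi>) v k = v k + (if k = i then \<xi> * v j else 0) - (if k = -j then \<xi> * v (-i) else 0)"
      by (rule mv_transv[OF f m k])
    have d: "dotn r (\<lambda>x. \<xi> * dl i x) v = \<xi> * v (-i)" using ij by simp
    have d2: "dotp r (dl j) v = v j" using ij by simp
    show "mat_vec I (transv i j \<xi>) v k = Lev r (\<lambda>x. \<xi> * dl i x) (dl j) v k"
      unfolding e Lev_apply d d2 using b[OF k] ij by (auto simp: dl_apply)
  qed
qed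

lemma T_Sieg:
  assumes g: "goodI r I" and ij: "1 \<le> i" "i \<le> int r" "1 \<le> j" "j \<le> int r" "i \<noteq> j"
  shows "agree I (mat_vec I (transv (-i) j \<xi>) v) (Sieg r (\<lambda>a b. \<xi> * (dl i a * dl j b - dl j a * dl i b)) v)"
proof -
  have f: "finite I" and m: "j \<in> I" "-(-i) \<in> I" and b: "\<And>k. k \<in> I \<Longrightarrow> \<bar>k\<bar> \<le> int r"
    using g ij unfolding goodI_def by auto
  have s: "\<And>a. (\<Sum>x\<in>{1..int r}. \<xi> * (dl i a * dl j x - dl j a * dl i x) * v x) = \<xi> * (dl i a * v j - dl j a * v i)"
  proof -
    fix a
    have "(\<Sum>x\<in>{1..int r}. \<xi> * (dl i a * dl j x - dl j a * dl i x) * v x)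
       = (\<Sum>x\<in>{1..int r}. (if x = j then \<xi> * dl i a * v x else 0) - (if x = i then \<xi> * dl j a * v x else 0))"
      by (rule sum.cong) (auto simp: dl_apply)
    also have "\<dots> = \<xi> * (dl i a * v j - dl j a * v i)" using ij by (simp add: sum_subtractf algebra_simps)
    finally show "?thesis a" .
  qed
  show ?thesis unfolding agree_def
  proof
    fix k assume k: "k \<in> I"
    have e: "mat_vec I (transv (-i) j \<xi>) v k = v k + (if k = -i then \<xi> * v j else 0) - (if k = -j then \<xi> * v (-(-i)) else 0)"
      by (rule mv_transv[OF f m k])
    show "mat_vec I (transv (-i) j \<xi>) v k = Sieg r (\<lambda>a b. \<xi> * (dl i a * dl j b - dl j a * dl i b)) v k"
      unfolding e Sieg_apply s using b[OF k] ij by (auto simp: dl_apply)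
  qed
qed

lemma T0_R0:
  assumes g: "goodI r I" and z: "0 \<in> I" and j: "1 \<le> j" "j \<le> int r"
  shows "agree I (mat_vec I (transv0 (-j) \<xi>) v) (R0 r (\<lambda>x. \<xi> * dl j x) v)"
proof -
  have f: "finite I" and m: "-(-j) \<in> I" and b: "\<And>k. k \<in> I \<Longrightarrow> \<bar>k\<bar> \<le> int r"
    using g j unfolding goodI_def by auto
  show ?thesis unfolding agree_def
  proof
    fix k assume k: "k \<in> I"
    have e: "mat_vec I (transv0 (-j) \<xi>) v k = v k + (if k = -j then 2 * \<xi> * v 0 - \<xi>^2 * v (-(-j)) else 0) - (if k = 0 then \<xi> * v (-(-j)) else 0)"
      by (rule mv_transv0[OF f z m k])
    have d: "dotp r (\<lambda>x. \<xi> * dl j x) v = \<xi> * v j" using j by simp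
    show "mat_vec I (transv0 (-j) \<xi>) v k = R0 r (\<lambda>x. \<xi> * dl j x) v k"
      unfolding e R0_apply d using b[OF k] j by (auto simp: dl_apply power2_eq_square algebra_simps)
  qed
qed

lemma ap_cons_agree:
  assumes "\<And>u. agree I (mat_vec I t u) (F u)" "\<And>u u'. agree I u u' \<Longrightarrow> agree I (F u) (F u')"
    "agree I (ap I ts v) w"
  shows "agree I (ap I (t#ts) v) (F w)"
proof -
  have "ap I (t#ts) v = mat_vec I t w" using mat_vec_agree[OF assms(3)] by (simp add: ap_def)
  then show ?thesis using assms(1) by simp
qed

lemma ap_append_agree:
  assumes "\<And>u. agree I (ap I xs u) (F u)" "agree I (ap I ys v) w"
  shows "agree I (ap I (xs @ ys) v) (F w)"
  using agree_trans[OF ap_agree[OF assms(2), of xs] assms(1)] by (simp add: ap_append)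

definition colL :: "nat \<Rightarrow> int \<Rightarrow> ('a::comm_ring_1) vec \<Rightarrow> int list \<Rightarrow> 'a mat list" where
  "colL r l P ks = map (\<lambda>k. transv k l (P k)) ks"
definition rowL :: "nat \<Rightarrow> int \<Rightarrow> ('a::comm_ring_1) vec \<Rightarrow> int list \<Rightarrow> 'a mat list" where
  "rowL r l Q js = map (\<lambda>j. transv l j (Q j)) js"

lemma colL_agree:
  assumes g: "goodI r I" and l: "1 \<le> l" "l \<le> int r"
    and ks: "distinct ks" "\<forall>k\<in>set ks. 1 \<le> k \<and> k \<le> int r \<and> k \<noteq> l"
  shows "agree I (ap I (colL r l P ks) v) (Lev r (\<lambda>k. if k \<in> set ks then P k else 0) (dl l) v)"
  using ks
proof (induction ks)
  case Nil then show ?case by (simp add: colL_def ap_def Lev_zero agree_def)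
next
  case (Cons k ks)
  have k: "1 \<le> k" "k \<le> int r" "k \<noteq> l" "k \<notin> set ks" using Cons.prems by auto
  have ih: "agree I (ap I (colL r l P ks) v) (Lev r (\<lambda>k. if k \<in> set ks then P k else 0) (dl l) v)"
    using Cons by auto
  have "agree I (ap I (transv k l (P k) # colL r l P ks) v)
     (Lev r (\<lambda>x. P k * dl k x) (dl l) (Lev r (\<lambda>k. if k \<in> set ks then P k else 0) (dl l) v))"
    by (rule ap_cons_agree[OF T_Lev[OF g k(1,2) l k(3)] agree_Lev[OF g] ih])
  moreover have "Lev r (\<lambda>x. P k * dl k x) (dl l) (Lev r (\<lambda>k. if k \<in> set ks then P k else 0) (dl l) v)
     = Lev r (\<lambda>x. if x \<in> set (k#ks) then P x else 0) (dl l) v"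
  proof -
    have "Lev r (\<lambda>x. P k * dl k x) (dl l) (Lev r (\<lambda>k. if k \<in> set ks then P k else 0) (dl l) v)
       = Lev r (\<lambda>x. P k * dl k x + (if x \<in> set ks then P x else 0)) (dl l) v"
      by (rule Lev_comp_p) (use l k Cons.prems in \<open>auto simp: dl_apply\<close>)
    also have "(\<lambda>x. P k * dl k x + (if x \<in> set ks then P x else 0)) = (\<lambda>x. if x \<in> set (k#ks) then P x else 0)"
      using k by (auto simp: fun_eq_iff dl_apply)
    finally show ?thesis .
  qed
  ultimately show ?case by (simp add: colL_def)
qed

lemma rowL_agree:
  assumes g: "goodI r I" and l: "1 \<le> l" "l \<le> int r"
    and js: "distinct js" "\<forall>k\<in>set js. 1 \<le> k \<and> k \<le> int r \<and> k \<noteq> l"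
  shows "agree I (ap I (rowL r l Q js) v) (Lev r (dl l) (\<lambda>k. if k \<in> set js then Q k else 0) v)"
  using js
proof (induction js)
  case Nil then show ?case by (simp add: rowL_def ap_def Lev_zero2 agree_def)
next
  case (Cons k ks)
  have k: "1 \<le> k" "k \<le> int r" "k \<noteq> l" "k \<notin> set ks" using Cons.prems by auto
  have ih: "agree I (ap I (rowL r l Q ks) v) (Lev r (dl l) (\<lambda>k. if k \<in> set ks then Q k else 0) v)"
    using Cons by auto
  have "agree I (ap I (transv l k (Q k) # rowL r l Q ks) v)
     (Lev r (\<lambda>x. Q k * dl l x) (dl k) (Lev r (dl l) (\<lambda>k. if k \<in> set ks then Q k else 0) v))"
    by (rule ap_cons_agree[OF T_Lev[OF g l k(1,2) k(3)[symmetric]] agree_Lev[OF g] ih])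
  moreover have "Lev r (\<lambda>x. Q k * dl l x) (dl k) (Lev r (dl l) (\<lambda>k. if k \<in> set ks then Q k else 0) v)
     = Lev r (dl l) (\<lambda>x. if x \<in> set (k#ks) then Q x else 0) v"
  proof -
    have "Lev r (\<lambda>x. Q k * dl l x) (dl k) (Lev r (dl l) (\<lambda>k. if k \<in> set ks then Q k else 0) v)
       = Lev r (dl l) (\<lambda>x. Q k * dl k x) (Lev r (dl l) (\<lambda>k. if k \<in> set ks then Q k else 0) v)"
      by (simp add: Lev_smult)
    also have "\<dots> = Lev r (dl l) (\<lambda>x. Q k * dl k x + (if x \<in> set ks then Q x else 0)) v"
      by (rule Lev_comp_q) (use l k Cons.prems in \<open>auto simp: dl_apply\<close>)
    also have "(\<lambda>x. Q k * dl k x + (if x \<in> set ks then Q x else 0)) = (\<lambda>x. if x \<in> set (k#ks) then Q x else 0)"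
      using k by (auto simp: fun_eq_iff dl_apply)
    finally show ?thesis .
  qed
  ultimately show ?case by (simp add: rowL_def)
qed

definition siegP :: "(int \<times> int) list \<Rightarrow> (int \<Rightarrow> int \<Rightarrow> 'a::comm_ring_1) \<Rightarrow> int \<Rightarrow> int \<Rightarrow> 'a" where
  "siegP ps c a b = (\<Sum>x\<leftarrow>ps. c (fst x) (snd x) * (dl (fst x) a * dl (snd x) b - dl (snd x) a * dl (fst x) b))"

definition siegL :: "(int \<times> int) list \<Rightarrow> (int \<Rightarrow> int \<Rightarrow> 'a::comm_ring_1) \<Rightarrow> 'a mat list" where
  "siegL ps c = map (\<lambda>x. transv (- fst x) (snd x) (c (fst x) (snd x))) ps"

lemma siegL_agree:
  assumes g: "goodI r I" and ps: "\<forall>x\<in>set ps. 1 \<le> fst x \<and> fst x \<le> int r \<and> 1 \<le> snd x \<and> snd x \<le> int r \<and> fst x \<noteq> snd x"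
  shows "agree I (ap I (siegL ps c) v) (Sieg r (siegP ps c) v)"
  using ps
proof (induction ps)
  case Nil
  have "Sieg r (siegP [] c) v = v" by (simp add: fun_eq_iff Sieg_apply siegP_def)
  then show ?case by (simp add: siegL_def ap_def agree_def)
next
  case (Cons x ps)
  obtain i j where x: "x = (i, j)" by (cases x)
  have ij: "1 \<le> i" "i \<le> int r" "1 \<le> j" "j \<le> int r" "i \<noteq> j" using Cons.prems x by auto
  have ih: "agree I (ap I (siegL ps c) v) (Sieg r (siegP ps c) v)" using Cons by auto
  have "agree I (ap I (transv (-i) j (c i j) # siegL ps c) v)
     (Sieg r (\<lambda>a b. c i j * (dl i a * dl j b - dl j a * dl i b)) (Sieg r (siegP ps c) v))"
    by (rule ap_cons_agree[OF T_Sieg[OF g ij] agree_Sieg[OF g] ih])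
  then show ?case by (simp add: siegL_def x Sieg_add siegP_def)
qed

definition r0L :: "int list \<Rightarrow> ('a::comm_ring_1) vec \<Rightarrow> 'a mat list" where
  "r0L js \<xi> = map (\<lambda>j. transv0 (-j) (\<xi> j)) js"

definition alt :: "nat \<Rightarrow> (int \<Rightarrow> int \<Rightarrow> 'a::comm_ring_1) \<Rightarrow> bool" where
  "alt r S \<longleftrightarrow> (\<forall>a b. 1 \<le> a \<and> a \<le> int r \<and> 1 \<le> b \<and> b \<le> int r \<longrightarrow> S a b = - S b a) \<and> (\<forall>a. S a a = 0)"

lemma r0L_agree:
  assumes g: "goodI r I" and z: "0 \<in> I" and js: "\<forall>j\<in>set js. 1 \<le> j \<and> j \<le> int r"
  shows "\<exists>S. alt r S \<and> agree I (ap I (r0L js \<xi>) v) (Sieg r S (R0 r (\<lambda>x. \<Sum>j\<leftarrow>js. \<xi> j * dl j x) v))"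
  using js
proof (induction js)
  case Nil
  have "R0 r (\<lambda>x. 0) v = v" by (simp add: fun_eq_iff R0_apply dotp_def)
  moreover have "Sieg r (\<lambda>a b. 0) v = v" by (simp add: fun_eq_iff Sieg_apply)
  moreover have "alt r (\<lambda>a b. 0)" by (simp add: alt_def)
  moreover have "agree I (ap I (r0L [] \<xi>) v) v" by (simp add: r0L_def ap_def agree_def)
  ultimately show ?case by (intro exI[of _ "\<lambda>a b. 0"]) simp
next
  case (Cons j js)
  have j: "1 \<le> j" "j \<le> int r" using Cons.prems by auto
  obtain S where S: "alt r S" and ih: "agree I (ap I (r0L js \<xi>) v) (Sieg r S (R0 r (\<lambda>x. \<Sum>j\<leftarrow>js. \<xi> j * dl j x) v))"
    using Cons by auto
  define \<eta> where "\<eta> = (\<lambda>x. \<Sum>j\<leftarrow>js. \<xi> j * dl j x)"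
  define \<zeta> where "\<zeta> = (\<lambda>x. \<xi> j * dl j x)"
  define S' where "S' = (\<lambda>a b. S a b + (\<eta> a * \<zeta> b - \<zeta> a * \<eta> b))"
  have "agree I (ap I (transv0 (-j) (\<xi> j) # r0L js \<xi>) v) (R0 r \<zeta> (Sieg r S (R0 r \<eta> v)))"
    unfolding \<zeta>_def \<eta>_def by (rule ap_cons_agree[OF T0_R0[OF g z j] agree_R0[OF g z] ih])
  moreover have "R0 r \<zeta> (Sieg r S (R0 r \<eta> v)) = Sieg r S' (R0 r (\<lambda>x. \<zeta> x + \<eta> x) v)"
    unfolding R0_Sieg R0_comp Sieg_add S'_def ..
  moreover have "alt r S'"
  proof -
    have "S' a b = - S' b a" if "1 \<le> a" "a \<le> int r" "1 \<le> b" "b \<le> int r" for a b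
    proof -
      have h: "S a b = - S b a" using S that unfolding alt_def by blast
      show ?thesis unfolding S'_def h by (simp add: algebra_simps)
    qed
    moreover have "S' a a = 0" for a
    proof -
      have h: "S a a = 0" using S unfolding alt_def by blast
      show ?thesis unfolding S'_def h by (simp add: mult.commute)
    qed
    ultimately show ?thesis unfolding alt_def by blast
  qed
  moreover have "(\<lambda>x. \<zeta> x + \<eta> x) = (\<lambda>x. \<Sum>j\<leftarrow>j#js. \<xi> j * dl j x)" by (simp add: \<zeta>_def \<eta>_def)
  moreover have "ap I (r0L (j#js) \<xi>) v = ap I (transv0 (-j) (\<xi> j) # r0L js \<xi>) v" by (simp add: r0L_def)
  ultimately show ?case by metis
qed

definition prs :: "nat \<Rightarrow> (int \<times> int) list" where
  "prs r = concat (map (\<lambda>j. map (\<lambda>i. (i, j)) [1..j-1]) [1..int r])"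

lemma sum_list_map_concat: "sum_list (map f (concat xss)) = sum_list (map (\<lambda>xs. sum_list (map f xs)) xss)"
  by (induction xss) auto

lemma sum_int_last: "0 \<le> n \<Longrightarrow> (\<Sum>j\<in>{1..n+1}. f j) = (\<Sum>j\<in>{1..(n::int)}. f j) + f (n+1)"
proof -
  assume "0 \<le> n"
  then have "{1..n+1} = insert (n+1) {1..n}" by auto
  then show ?thesis by (simp add: add.commute)
qed

lemma prs_set: "x \<in> set (prs r) \<Longrightarrow> 1 \<le> fst x \<and> fst x < snd x \<and> snd x \<le> int r"
  by (auto simp: prs_def)

lemma prs_length: "length (prs r) = r * (r - 1) div 2"
proof -
  have l: "length (prs r) = (\<Sum>j\<in>{1..int r}. nat (j - 1))"
    unfolding prs_def length_concat by (simp add: o_def sum_list_distinct_conv_sum_set)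
  have "2 * (\<Sum>j\<in>{1..int r}. nat (j - 1)) = r * (r - 1)"
  proof (induction r)
    case 0 then show ?case by simp
  next
    case (Suc r)
    have "(\<Sum>j\<in>{1..int (Suc r)}. nat (j - 1)) = (\<Sum>j\<in>{1..int r}. nat (j - 1)) + r"
      using sum_int_last[of "int r" "\<lambda>j. nat (j - 1)"] by (simp add: add.commute[of "int r" 1])
    then show ?case using Suc by (cases r) (auto simp: algebra_simps)
  qed
  then show ?thesis using l by simp
qed

lemma siegP_prs:
  assumes S: "alt r S" and ab: "1 \<le> a" "a \<le> int r" "1 \<le> b" "b \<le> int r"
  shows "siegP (prs r) S a b = S a b"
proof -
  have "siegP (prs r) S a b = (\<Sum>j\<in>{1..int r}. \<Sum>i\<in>{1..j-1}. S i j * (dl i a * dl j b - dl j a * dl i b))"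
    unfolding siegP_def prs_def sum_list_map_concat by (simp add: o_def sum_list_distinct_conv_sum_set)
  also have "\<dots> = (\<Sum>j\<in>{1..int r}. (if j = b then (\<Sum>i\<in>{1..j-1}. if i = a then S i j else 0) else 0))
      - (\<Sum>j\<in>{1..int r}. (if j = a then (\<Sum>i\<in>{1..j-1}. if i = b then S i j else 0) else 0))"
    unfolding sum_subtractf[symmetric]
  proof (rule sum.cong[OF refl])
    fix j
    show "(\<Sum>i\<in>{1..j-1}. S i j * (dl i a * dl j b - dl j a * dl i b)) =
      (if j = b then (\<Sum>i\<in>{1..j-1}. if i = a then S i j else 0) else 0) -
      (if j = a then (\<Sum>i\<in>{1..j-1}. if i = b then S i j else 0) else 0)"
      unfolding sum_subtractf[symmetric] if_distrib[of "\<lambda>x. x - _"] if_distrib[of "\<lambda>x. _ - x"]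
      by (auto simp: dl_apply sum_subtractf sum_negf if_distrib[of "\<lambda>x. _ * x"] cong: if_cong)
  qed
  also have "\<dots> = (if a < b then S a b else 0) - (if b < a then S b a else 0)"
    using ab by simp
  also have "\<dots> = S a b"
  proof -
    have h1: "S a b = - S b a" using S ab unfolding alt_def by blast
    have h2: "S a a = 0" using S unfolding alt_def by blast
    show ?thesis
    proof (cases "a < b")
      case True then show ?thesis by simp
    next
      case False
      show ?thesis
      proof (cases "b < a")
        case True then show ?thesis using False h1 by simp
      next
        case F2: False
        then have "a = b" using False by simp
        then show ?thesis using h2 by simp
      qed
    qed
  qed
  finally show ?thesis .
qed

lemma siegL_prs_agree:
  assumes g: "goodI r I" and S: "alt r S"
  shows "agree I (ap I (siegL (prs r) S) v) (Sieg r S v)"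
proof -
  have "agree I (ap I (siegL (prs r) S) v) (Sieg r (siegP (prs r) S) v)"
    by (rule siegL_agree[OF g]) (auto dest: prs_set)
  moreover have "Sieg r (siegP (prs r) S) v = Sieg r S v"
    by (rule Sieg_cong) (simp add: siegP_prs[OF S])
  ultimately show ?thesis by simp
qed

lemma dotp_multc_left[simp]: "dotp r (\<lambda>k. x k * c) y = c * dotp r x y"
  by (simp add: dotp_def sum_distrib_left algebra_simps)
lemma dotp_multc_right[simp]: "dotp r y (\<lambda>k. x k * c) = c * dotp r y x"
  by (simp add: dotp_def sum_distrib_left algebra_simps)
lemma dotp_refl_left: "dotp r (\<lambda>k. y (-k)) x = dotn r x y"
  by (simp add: dotp_def dotn_def mult.commute)
lemma dotn_add_right[simp]: "dotn r x (\<lambda>k. y k + z k) = dotn r x y + dotn r x z"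
  by (simp add: dotn_def algebra_simps sum.distrib)
lemma dotn_smult_right[simp]: "dotn r x (\<lambda>k. c * y k) = c * dotn r x y"
  by (simp add: dotn_def sum_distrib_left algebra_simps)

lemma Lev_piece:
  assumes l: "1 \<le> l" "l \<le> int r" and pl: "p l = 0" and qp: "dotp r q p = 0"
    and qh: "qh = (\<lambda>k. q k - q l * dl l k)"
  shows "Lev r (\<lambda>k. (1 + q l) * p k) (dl l) (Lev r (dl l) qh (Lev r (\<lambda>k. - p k) (dl l) (Lev r (dl l) (\<lambda>k. - qh k) v)))
     = Lev r p q v"
proof -
  have qhl: "qh l = 0" by (simp add: qh dl_apply)
  have qhp: "dotp r qh p = 0" using l pl qp by (simp add: qh)
  define Y where "Y = Lev r (dl l) qh (Lev r (\<lambda>k. - p k) (dl l) (Lev r (dl l) (\<lambda>k. - qh k) v))"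
  have c: "Lev r p (dl l) Y = Lev r p qh v"
    unfolding Y_def by (rule Lev_commutator[OF l pl qhl qhp])
  have "Lev r (\<lambda>k. q l * p k) (dl l) (Lev r p (dl l) Y) = Lev r (\<lambda>k. q l * p k + p k) (dl l) Y"
    using l pl by (intro Lev_comp_p) simp_all
  also have "(\<lambda>k. q l * p k + p k) = (\<lambda>k. (1 + q l) * p k)" by (simp add: fun_eq_iff algebra_simps)
  finally have e1: "Lev r (\<lambda>k. (1 + q l) * p k) (dl l) Y = Lev r (\<lambda>k. q l * p k) (dl l) (Lev r p qh v)"
    using c by simp
  have "Lev r (\<lambda>k. q l * p k) (dl l) (Lev r p qh v) = Lev r p (\<lambda>k. q l * dl l k) (Lev r p qh v)"
    by (rule Lev_smult)
  also have "\<dots> = Lev r p (\<lambda>k. q l * dl l k + qh k) v"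
    using l pl qhp by (intro Lev_comp_q) simp_all
  also have "(\<lambda>k. q l * dl l k + qh k) = q" by (simp add: fun_eq_iff qh)
  finally show ?thesis using e1 by (simp add: Y_def)
qed

locale core =
  fixes r :: nat and s z e0 :: "'a::comm_ring_1" and b w a a2 :: "'a vec"
  assumes r3: "r \<ge> 3"
    and aR: "a (int r) = 0" and a2R: "a2 (int r) = 0"
    and H1: "dotp r a b = s"
    and H4: "dotp r a2 b + dotp r a w + s^3 * z * dotp r a2 w = 0"
    and HE: "s * (dotn r b w + dotn r w b + s^3 * z * dotn r w w) + e0 = 0"
begin

abbreviation "R \<equiv> int r"
definition "X = s^3 * z"
definition "T = s^2 * z"
definition "T2 = s * z"
definition "beta = (\<lambda>k. b k + X * w k)"
definition "aw = dotp r a w"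
definition "kap = (\<lambda>k. w R * (a k + X * a2 k) - (1 - b R) * a2 k)"
definition "nu = (\<lambda>k. T * kap k)"
definition "U = (\<lambda>k. (1 - b R) * a k + s * dl R k)"
definition "ph = (\<lambda>k. s * (w k - w R * dl R k) - ((1 - b R) * aw) * dl R k)"
definition "p = (\<lambda>k. T2 * ph k)"
definition "cn = (\<lambda>k. beta (-k) + beta (-R) * nu k)"
definition "gam = (\<lambda>k. s * w (-k) + beta (-R) * kap k)"
definition "D = (\<lambda>k. z * (s * gam k + U k * dotp r ph cn + e0 * a k))"
definition "S = (\<lambda>i j. D i * a j - a i * D j)"

lemma R1: "1 \<le> R" "2 < R" using r3 by auto

lemma kapR: "kap R = 0" by (simp add: kap_def aR a2R)
lemma nuR: "nu R = 0" by (simp add: nu_def kapR)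
lemma UR: "U R = s" by (simp add: U_def aR dl_apply)

lemma dotp_kap: "dotp r kap x = w R * (dotp r a x + X * dotp r a2 x) - (1 - b R) * dotp r a2 x"
  by (simp add: kap_def)
lemma dotp_kap2: "dotp r x kap = w R * (dotp r x a + X * dotp r x a2) - (1 - b R) * dotp r x a2"
  by (simp add: kap_def)

lemma K1: "dotp r U b = s"
  using R1 by (simp add: U_def H1 algebra_simps)

lemma Uph: "dotp r U ph = 0"
  using R1 by (simp add: U_def ph_def aR aw_def dotp_commute[of r a w]) (simp add: dl_apply algebra_simps)

lemma Up: "dotp r U p = 0"
  by (simp add: p_def Uph)

lemma K4: "dotp r nu beta = X * w R + (1 - b R) * T * aw"
proof -
  have h4: "dotp r a2 b + X * dotp r a2 w = - aw" using H4 unfolding X_def aw_def by (simp add: algebra_simps eq_neg_iff_add_eq_0)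
  have "dotp r nu beta = T * (w R * (dotp r a b + X * (dotp r a2 b + aw + X * dotp r a2 w)) - (1 - b R) * (dotp r a2 b + X * dotp r a2 w))"
    by (simp add: nu_def beta_def dotp_kap aw_def) (simp add: algebra_simps)
  also have "\<dots> = T * (w R * s + (1 - b R) * aw)" using h4 H1 by (simp add: algebra_simps)
  finally show ?thesis by (simp add: T_def X_def algebra_simps power3_eq_cube power2_eq_square)
qed

lemma Eid: "dotp r gam b + dotp r ph cn = s * (dotn r b w + dotn r w b + X * dotn r w w)"
proof -
  have h4: "dotp r a2 b + X * dotp r a2 w = - aw" using H4 unfolding X_def aw_def by (simp add: algebra_simps eq_neg_iff_add_eq_0)
  have cnR: "cn R = beta (-R)" by (simp add: cn_def nuR)
  have g: "dotp r gam b = s * dotn r b w + beta (-R) * (w R * (s + X * dotp r a2 b) - (1 - b R) * dotp r a2 b)"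
    using H1 by (simp add: gam_def dotp_kap dotp_refl_left[of r "\<lambda>k. s * w k", simplified])
  have wcn: "dotp r w cn = dotn r w b + X * dotn r w w + beta (-R) * (T * (w R * (aw + X * dotp r a2 w) - (1 - b R) * dotp r a2 w))"
  proof -
    have "dotp r w (\<lambda>k. beta (-k)) = dotn r w beta" by (simp add: dotp_commute[of r w] dotp_refl_left)
    then show ?thesis by (simp add: cn_def nu_def dotp_kap2 beta_def aw_def dotp_commute[of r w])
  qed
  have p: "dotp r ph cn = s * (dotp r w cn - w R * beta (-R)) - (1 - b R) * aw * beta (-R)"
    using R1 by (simp add: ph_def cnR)
  have "dotp r gam b + dotp r ph cn - s * (dotn r b w + dotn r w b + X * dotn r w w)
     = beta (-R) * (w R * (s + X * (dotp r a2 b + aw + X * dotp r a2 w)) - (1 - b R) * (dotp r a2 b + X * dotp r a2 w)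
        - s * w R - (1 - b R) * aw) + (s * T - X) * beta (-R) * (w R * (aw + X * dotp r a2 w) - (1 - b R) * dotp r a2 w)"
    unfolding g p wcn by (simp add: algebra_simps)
  also have "\<dots> = 0" using h4 by (simp add: T_def X_def algebra_simps power3_eq_cube power2_eq_square)
  finally show ?thesis by simp
qed

lemma K3: "dotp r D b = 0"
proof -
  have "dotp r D b = z * (s * dotp r gam b + dotp r U b * dotp r ph cn + e0 * dotp r a b)"
    by (simp add: D_def algebra_simps)
  also have "\<dots> = z * s * (dotp r gam b + dotp r ph cn + e0)" by (simp add: K1 H1 algebra_simps)
  also have "\<dots> = z * s * (s * (dotn r b w + dotn r w b + X * dotn r w w) + e0)" by (simp add: Eid)
  also have "\<dots> = 0" using HE by (simp add: X_def)
  finally show ?thesis .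
qed

definition "p1 = (\<lambda>k. s * T2 * w 1 * dl 1 k - U 1 * T2 * w 1 * dl R k)"
definition "p2 = (\<lambda>k. p k - p1 k)"

lemma Up1: "dotp r U p1 = 0"
  using R1 by (simp add: p1_def UR)
lemma Up2: "dotp r U p2 = 0"
  by (simp add: p2_def Up Up1)
lemma p12: "(\<lambda>k. p1 k + p2 k) = p" by (simp add: p2_def)
lemma p1_2: "p1 2 = 0" using R1 by (simp add: p1_def dl_apply)
lemma p2_1: "p2 1 = 0" using R1 by (simp add: p2_def p1_def p_def ph_def dl_apply)

lemma M_split: "Lev r p1 U (Lev r p2 U v) = Lev r p U v"
  using Lev_comp_p[OF Up1 Up2] p12 by simp

lemma final:
  assumes vp: "\<And>k. 1 \<le> k \<Longrightarrow> k \<le> R \<Longrightarrow> v0 k = b k"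
    and vn: "\<And>k. 1 \<le> k \<Longrightarrow> k \<le> R \<Longrightarrow> v0 (-k) = b (-k) - s * z * e0 * a k"
  shows "\<And>k. 1 \<le> k \<Longrightarrow> k \<le> R \<Longrightarrow> Lev r (dl R) nu (Lev r p U (Sieg r S v0)) k = beta k"
    and "\<And>k. 1 \<le> k \<Longrightarrow> k \<le> R \<Longrightarrow> Lev r (dl R) nu (Lev r p U (Sieg r S v0)) (-k) = beta (-k)"
    and "Lev r (dl R) nu (Lev r p U (Sieg r S v0)) 0 = v0 0"
proof -
  define v1 where "v1 = Sieg r S v0"
  define v2 where "v2 = Lev r p U v1"
  have dv0: "\<And>x. dotp r x v0 = dotp r x b" by (rule dotp_cong2) (simp add: vp)
  have dv1: "\<And>x. dotp r x v1 = dotp r x b" by (simp add: v1_def dv0)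
  have v1p: "\<And>k. 1 \<le> k \<Longrightarrow> k \<le> R \<Longrightarrow> v1 k = b k" by (simp add: v1_def Sieg_apply vp)
  have v1n: "v1 (-j) = cn j + U j * dotp r p cn" if j: "1 \<le> j" "j \<le> R" for j
  proof -
    have "(\<Sum>i\<in>{1..R}. S j i * v0 i) = D j * dotp r a v0 - a j * dotp r D v0"
      by (simp add: dotp_def S_def left_diff_distrib sum_subtractf sum_distrib_left mult.assoc)
    also have "\<dots> = D j * s" using K3 H1 by (simp add: dv0)
    finally have e: "(\<Sum>i\<in>{1..R}. S j i * v0 i) = D j * s" .
    have "v1 (-j) = b (-j) - s * z * e0 * a j + D j * s" using j by (simp add: v1_def Sieg_apply e vn)
    also have "\<dots> = cn j + U j * dotp r p cn"
      by (simp add: D_def cn_def gam_def nu_def beta_def p_def X_def T_def T2_def)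
         (simp add: algebra_simps power3_eq_cube power2_eq_square)
    finally show ?thesis .
  qed
  have dn1: "dotn r p v1 = dotp r p cn"
  proof -
    have "dotn r p v1 = dotp r p (\<lambda>j. cn j + U j * dotp r p cn)"
      unfolding dotn_def dotp_def[of r p "\<lambda>j. cn j + U j * dotp r p cn"] by (rule sum.cong) (simp_all add: v1n)
    also have "\<dots> = dotp r p cn" using Up by (simp add: dotp_commute[of r p U])
    finally show ?thesis .
  qed
  have v2p: "v2 k = b k + p k * s" if "1 \<le> k" "k \<le> R" for k
    using that by (simp add: v2_def Lev_apply v1p dv1 K1)
  have v2n: "v2 (-j) = cn j" if j: "1 \<le> j" "j \<le> R" for j
    using j by (simp add: v2_def Lev_apply v1n dn1)
  have nuph: "dotp r nu ph = s * dotp r nu w" using R1 by (simp add: ph_def nuR)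
  have dnu2: "dotp r nu v2 = dotp r nu beta"
  proof -
    have "dotp r nu v2 = dotp r nu (\<lambda>k. b k + s * p k)"
      by (rule dotp_cong2) (simp add: v2p mult.commute)
    also have "\<dots> = dotp r nu beta"
      by (simp add: beta_def p_def nuph X_def T2_def) (simp add: algebra_simps power3_eq_cube)
    finally show ?thesis .
  qed
  have pR: "p R = - (T2 * (1 - b R) * aw)" using R1 by (simp add: p_def ph_def dl_apply)
  have cnR: "cn R = beta (-R)" by (simp add: cn_def nuR)
  show "Lev r (dl R) nu (Lev r p U (Sieg r S v0)) k = beta k" if k: "1 \<le> k" "k \<le> R" for k
  proof (cases "k = R")
    case True
    have "Lev r (dl R) nu v2 k = b R + p R * s + dotp r nu beta" using k True by (simp add: Lev_apply v2p dnu2 dl_apply)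
    also have "\<dots> = beta R" unfolding pR K4 by (simp add: beta_def T_def T2_def) (simp add: algebra_simps power2_eq_square)
    finally show ?thesis using True by (simp add: v2_def v1_def)
  next
    case False
    have "Lev r (dl R) nu v2 k = b k + p k * s" using k False by (simp add: Lev_apply v2p dl_apply)
    also have "\<dots> = beta k" using False by (simp add: p_def ph_def dl_apply beta_def X_def T2_def) (simp add: algebra_simps power3_eq_cube)
    finally show ?thesis by (simp add: v2_def v1_def)
  qed
  show "Lev r (dl R) nu (Lev r p U (Sieg r S v0)) (-k) = beta (-k)" if k: "1 \<le> k" "k \<le> R" for k
  proof -
    have "Lev r (dl R) nu v2 (-k) = cn k - nu k * cn R" using k R1 by (simp add: Lev_apply v2n)
    also have "\<dots> = beta (-k)" unfolding cnR by (simp add: cn_def)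
    finally show ?thesis by (simp add: v2_def v1_def)
  qed
  show "Lev r (dl R) nu (Lev r p U (Sieg r S v0)) 0 = v0 0"
    by (simp add: Lev_apply Sieg_apply)
qed

end

lemma R0_cong: "(\<And>k. 1 \<le> k \<Longrightarrow> k \<le> int r \<Longrightarrow> \<xi> k = \<xi>' k) \<Longrightarrow> R0 r \<xi> v = R0 r \<xi>' v"
proof -
  assume h: "\<And>k. 1 \<le> k \<Longrightarrow> k \<le> int r \<Longrightarrow> \<xi> k = \<xi>' k"
  have "dotp r \<xi> v = dotp r \<xi>' v" by (rule dotp_cong) (simp add: h)
  then show ?thesis using h by (auto simp: fun_eq_iff R0_apply)
qed

lemma sum_list_dl: "distinct js \<Longrightarrow> (\<Sum>j\<leftarrow>js. f j * dl j x) = (if x \<in> set js then f x else 0)"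
proof (induction js)
  case Nil then show ?case by simp
next
  case (Cons j js) then show ?case by (auto simp: dl_apply)
qed

context core
begin

definition "qh1 = (\<lambda>k. U k - U 2 * dl 2 k)"
definition "qh2 = (\<lambda>k. U k - U 1 * dl 1 k)"
definition "M1L = colL r 2 (\<lambda>k. (1 + U 2) * p1 k) [1, R] @ rowL r 2 qh1 (1 # [3..R])
   @ colL r 2 (\<lambda>k. - p1 k) [1, R] @ rowL r 2 (\<lambda>k. - qh1 k) (1 # [3..R])"
definition "M2L = colL r 1 (\<lambda>k. (1 + U 1) * p2 k) [2..R] @ rowL r 1 qh2 [2..R]
   @ colL r 1 (\<lambda>k. - p2 k) [2..R] @ rowL r 1 (\<lambda>k. - qh2 k) [2..R]"
definition "FL = rowL r R nu [1..R-1]"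

lemma p1_zero: "1 \<le> k \<Longrightarrow> k \<le> R \<Longrightarrow> k \<noteq> 1 \<Longrightarrow> k \<noteq> R \<Longrightarrow> p1 k = 0"
  by (simp add: p1_def dl_apply)
lemma p2_zero: "p2 1 = 0" by (rule p2_1)

lemma M1_agree: "goodI r I \<Longrightarrow> agree I (ap I M1L v) (Lev r p1 U v)"
proof -
  assume g: "goodI r I"
  have l: "1 \<le> (2::int)" "2 \<le> R" using R1 by auto
  have s1: "distinct [1, R]" "\<forall>k\<in>set [1, R]. 1 \<le> k \<and> k \<le> R \<and> k \<noteq> 2" using R1 by auto
  have s2: "distinct (1 # [3..R])" "\<forall>k\<in>set (1 # [3..R]). 1 \<le> k \<and> k \<le> R \<and> k \<noteq> 2" using R1 by auto
  have A1: "\<And>u. agree I (ap I (colL r 2 (\<lambda>k. (1 + U 2) * p1 k) [1, R]) u) (Lev r (\<lambda>k. (1 + U 2) * p1 k) (dl 2) u)"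
  proof -
    fix u
    have B: "Lev r (\<lambda>k. if k \<in> set [1, R] then (1 + U 2) * p1 k else 0) (dl 2) u = Lev r (\<lambda>k. (1 + U 2) * p1 k) (dl 2) u"
      by (rule Lev_cong) (auto simp: p1_zero)
    show "?thesis u" using colL_agree[OF g l s1, of "\<lambda>k. (1 + U 2) * p1 k" u] unfolding B .
  qed
  have A3: "\<And>u. agree I (ap I (colL r 2 (\<lambda>k. - p1 k) [1, R]) u) (Lev r (\<lambda>k. - p1 k) (dl 2) u)"
  proof -
    fix u
    have B: "Lev r (\<lambda>k. if k \<in> set [1, R] then - p1 k else 0) (dl 2) u = Lev r (\<lambda>k. - p1 k) (dl 2) u"
      by (rule Lev_cong) (auto simp: p1_zero)
    show "?thesis u" using colL_agree[OF g l s1, of "\<lambda>k. - p1 k" u] unfolding B .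
  qed
  have z: "qh1 2 = 0" by (simp add: qh1_def dl_apply)
  have e: "(if k \<in> set (1 # [3..R]) then Q k else 0) = Q k" if "1 \<le> k" "k \<le> R" "Q 2 = 0" for k Q
  proof (cases "k \<in> set (1 # [3..R])")
    case True then show ?thesis by simp
  next
    case False
    then have "k = 2" using that by auto
    then show ?thesis using False that by simp
  qed
  have A2: "\<And>u. agree I (ap I (rowL r 2 qh1 (1 # [3..R])) u) (Lev r (dl 2) qh1 u)"
  proof -
    fix u
    have B: "Lev r (dl 2) (\<lambda>k. if k \<in> set (1 # [3..R]) then qh1 k else 0) u = Lev r (dl 2) qh1 u"
      by (rule Lev_cong[OF refl e]) (simp_all add: z)
    show "?thesis u" using rowL_agree[OF g l s2, of qh1 u] unfolding B .
  qed
  have A4: "\<And>u. agree I (ap I (rowL r 2 (\<lambda>k. - qh1 k) (1 # [3..R])) u) (Lev r (dl 2) (\<lambda>k. - qh1 k) u)"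
  proof -
    fix u
    have B: "Lev r (dl 2) (\<lambda>k. if k \<in> set (1 # [3..R]) then - qh1 k else 0) u = Lev r (dl 2) (\<lambda>k. - qh1 k) u"
      by (rule Lev_cong[OF refl e]) (simp_all add: z)
    show "?thesis u" using rowL_agree[OF g l s2, of "\<lambda>k. - qh1 k" u] unfolding B .
  qed
  have "agree I (ap I M1L v) (Lev r (\<lambda>k. (1 + U 2) * p1 k) (dl 2) (Lev r (dl 2) qh1
     (Lev r (\<lambda>k. - p1 k) (dl 2) (Lev r (dl 2) (\<lambda>k. - qh1 k) v))))"
    unfolding M1L_def
    by (rule ap_append_agree[OF A1 ap_append_agree[OF A2 ap_append_agree[OF A3 A4]]])
  also have "Lev r (\<lambda>k. (1 + U 2) * p1 k) (dl 2) (Lev r (dl 2) qh1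
     (Lev r (\<lambda>k. - p1 k) (dl 2) (Lev r (dl 2) (\<lambda>k. - qh1 k) v))) = Lev r p1 U v"
    by (rule Lev_piece[OF l p1_2 Up1 qh1_def])
  finally show ?thesis .
qed

lemma M2_agree: "goodI r I \<Longrightarrow> agree I (ap I M2L v) (Lev r p2 U v)"
proof -
  assume g: "goodI r I"
  have l: "1 \<le> (1::int)" "1 \<le> R" using R1 by auto
  have s1: "distinct [2..R]" "\<forall>k\<in>set [2..R]. 1 \<le> k \<and> k \<le> R \<and> k \<noteq> 1" using R1 by auto
  have e: "(if k \<in> set [2..R] then Q k else 0) = Q k" if "1 \<le> k" "k \<le> R" "Q 1 = 0" for k Q
  proof (cases "k \<in> set [2..R]")
    case True then show ?thesis by simp
  next
    case False
    then have "k = 1" using that by auto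
    then show ?thesis using False that by simp
  qed
  have z: "qh2 1 = 0" by (simp add: qh2_def dl_apply)
  have A1: "\<And>u. agree I (ap I (colL r 1 (\<lambda>k. (1 + U 1) * p2 k) [2..R]) u) (Lev r (\<lambda>k. (1 + U 1) * p2 k) (dl 1) u)"
  proof -
    fix u
    have B: "Lev r (\<lambda>k. if k \<in> set [2..R] then (1 + U 1) * p2 k else 0) (dl 1) u = Lev r (\<lambda>k. (1 + U 1) * p2 k) (dl 1) u"
      by (rule Lev_cong[OF e refl]) (simp_all add: p2_1)
    show "?thesis u" using colL_agree[OF g l s1, of "\<lambda>k. (1 + U 1) * p2 k" u] unfolding B .
  qed
  have A3: "\<And>u. agree I (ap I (colL r 1 (\<lambda>k. - p2 k) [2..R]) u) (Lev r (\<lambda>k. - p2 k) (dl 1) u)"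
  proof -
    fix u
    have B: "Lev r (\<lambda>k. if k \<in> set [2..R] then - p2 k else 0) (dl 1) u = Lev r (\<lambda>k. - p2 k) (dl 1) u"
      by (rule Lev_cong[OF e refl]) (simp_all add: p2_1)
    show "?thesis u" using colL_agree[OF g l s1, of "\<lambda>k. - p2 k" u] unfolding B .
  qed
  have A2: "\<And>u. agree I (ap I (rowL r 1 qh2 [2..R]) u) (Lev r (dl 1) qh2 u)"
  proof -
    fix u
    have B: "Lev r (dl 1) (\<lambda>k. if k \<in> set [2..R] then qh2 k else 0) u = Lev r (dl 1) qh2 u"
      by (rule Lev_cong[OF refl e]) (simp_all add: z)
    show "?thesis u" using rowL_agree[OF g l s1, of qh2 u] unfolding B .
  qed
  have A4: "\<And>u. agree I (ap I (rowL r 1 (\<lambda>k. - qh2 k) [2..R]) u) (Lev r (dl 1) (\<lambda>k. - qh2 k) u)"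
  proof -
    fix u
    have B: "Lev r (dl 1) (\<lambda>k. if k \<in> set [2..R] then - qh2 k else 0) u = Lev r (dl 1) (\<lambda>k. - qh2 k) u"
      by (rule Lev_cong[OF refl e]) (simp_all add: z)
    show "?thesis u" using rowL_agree[OF g l s1, of "\<lambda>k. - qh2 k" u] unfolding B .
  qed
  have "agree I (ap I M2L v) (Lev r (\<lambda>k. (1 + U 1) * p2 k) (dl 1) (Lev r (dl 1) qh2
     (Lev r (\<lambda>k. - p2 k) (dl 1) (Lev r (dl 1) (\<lambda>k. - qh2 k) v))))"
    unfolding M2L_def
    by (rule ap_append_agree[OF A1 ap_append_agree[OF A2 ap_append_agree[OF A3 A4]]])
  also have "Lev r (\<lambda>k. (1 + U 1) * p2 k) (dl 1) (Lev r (dl 1) qh2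
     (Lev r (\<lambda>k. - p2 k) (dl 1) (Lev r (dl 1) (\<lambda>k. - qh2 k) v))) = Lev r p2 U v"
    by (rule Lev_piece[OF l p2_1 Up2 qh2_def])
  finally show ?thesis .
qed

lemma F_agree: "goodI r I \<Longrightarrow> agree I (ap I FL v) (Lev r (dl R) nu v)"
proof -
  assume g: "goodI r I"
  have l: "1 \<le> R" "R \<le> R" using R1 by auto
  have s1: "distinct [1..R-1]" "\<forall>k\<in>set [1..R-1]. 1 \<le> k \<and> k \<le> R \<and> k \<noteq> R" by auto
  have B: "Lev r (dl R) (\<lambda>k. if k \<in> set [1..R-1] then nu k else 0) v = Lev r (dl R) nu v"
    by (rule Lev_cong) (auto simp: nuR)
  show ?thesis using rowL_agree[OF g l s1, of nu v] unfolding B FL_def .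
qed

lemma S_alt: "alt r S" by (simp add: alt_def S_def algebra_simps)

lemma gen_mem: "i \<in> idx_even r \<Longrightarrow> j \<in> idx_even r \<Longrightarrow> i \<noteq> j \<Longrightarrow> i \<noteq> - j \<Longrightarrow> transv i j \<xi> \<in> EO_gens_even r"
  unfolding EO_gens_even_def by blast
lemma colL_gens: "1 \<le> l \<Longrightarrow> l \<le> R \<Longrightarrow> \<forall>k\<in>set ks. 1 \<le> k \<and> k \<le> R \<and> k \<noteq> l \<Longrightarrow> set (colL r l P ks) \<subseteq> EO_gens_even r"
  unfolding colL_def by (auto intro!: gen_mem simp: idx_even_def)
lemma rowL_gens: "1 \<le> l \<Longrightarrow> l \<le> R \<Longrightarrow> \<forall>k\<in>set ks. 1 \<le> k \<and> k \<le> R \<and> k \<noteq> l \<Longrightarrow> set (rowL r l P ks) \<subseteq> EO_gens_even r"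
  unfolding rowL_def by (auto intro!: gen_mem simp: idx_even_def)
lemma siegL_gens: "set (siegL (prs r) c) \<subseteq> EO_gens_even r"
proof
  fix t assume "t \<in> set (siegL (prs r) c)"
  then obtain x where x: "x \<in> set (prs r)" "t = transv (- fst x) (snd x) (c (fst x) (snd x))"
    by (auto simp: siegL_def)
  have "1 \<le> fst x \<and> fst x < snd x \<and> snd x \<le> R" by (rule prs_set[OF x(1)])
  then show "t \<in> EO_gens_even r" unfolding x(2) by (intro gen_mem) (auto simp: idx_even_def)
qed

definition "Lst = FL @ M1L @ M2L"

lemma Lst_gens: "set Lst \<subseteq> EO_gens_even r"
  unfolding Lst_def FL_def M1L_def M2L_def using R1
  by (simp add: colL_gens rowL_gens del: upto.simps)

lemma Lst_length: "length Lst = 7 * r - 3"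
  unfolding Lst_def FL_def M1L_def M2L_def using R1 by (simp add: colL_def rowL_def)

lemma Lst_agree: "goodI r I \<Longrightarrow> agree I (ap I Lst v) (Lev r (dl R) nu (Lev r p U v))"
proof -
  assume g: "goodI r I"
  have "agree I (ap I Lst v) (Lev r (dl R) nu (Lev r p1 U (Lev r p2 U v)))"
    unfolding Lst_def
    by (rule ap_append_agree[OF F_agree[OF g] ap_append_agree[OF M1_agree[OF g] M2_agree[OF g]]])
  then show ?thesis by (simp add: M_split)
qed

end

context core
begin

lemma idx_cases: "i \<in> idx_odd r \<Longrightarrow> i = 0 \<or> (1 \<le> i \<and> i \<le> R) \<or> (\<exists>k. i = -k \<and> 1 \<le> k \<and> k \<le> R)"
  by (auto simp: idx_odd_def intro: exI[of _ "-i"])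

lemma final_all:
  assumes vp: "\<And>k. 1 \<le> k \<Longrightarrow> k \<le> R \<Longrightarrow> v0 k = b k"
    and vn: "\<And>k. 1 \<le> k \<Longrightarrow> k \<le> R \<Longrightarrow> v0 (-k) = b (-k) - s * z * e0 * a k"
    and v00: "v0 0 = beta 0"
    and i: "i \<in> idx_odd r"
  shows "Lev r (dl R) nu (Lev r p U (Sieg r S v0)) i = beta i"
  using idx_cases[OF i] final[OF vp vn] v00 by auto

theorem core_even:
  assumes e0: "e0 = 0"
  shows "\<exists>g\<in>EO_le_even r (r * (r - 1) div 2 + 8 * r - 4). \<forall>i\<in>idx_even r. beta i = mat_vec (idx_even r) g b i"
proof -
  let ?I = "idx_even r"
  define ts where "ts = Lst @ siegL (prs r) S"
  define g where "g = foldr (mat_mult ?I) ts idm"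
  have gI: "goodI r ?I" by (rule goodI_even)
  have len: "length ts = 7 * r - 3 + r * (r - 1) div 2" by (simp add: ts_def Lst_length siegL_def prs_length)
  have "length ts \<le> r * (r - 1) div 2 + 8 * r - 4" unfolding len using R1 by simp
  moreover have "set ts \<subseteq> EO_gens_even r" using Lst_gens siegL_gens by (simp add: ts_def)
  ultimately have mem: "g \<in> EO_le_even r (r * (r - 1) div 2 + 8 * r - 4)"
    unfolding EO_le_even_def EO_le_def g_def by blast
  have "agree ?I (mat_vec ?I g b) (ap ?I ts b)" unfolding g_def by (rule foldr_ap) (simp add: gI[unfolded goodI_def])
  moreover have "agree ?I (ap ?I ts b) (Lev r (dl R) nu (Lev r p U (Sieg r S b)))"
    unfolding ts_def by (rule ap_append_agree[OF Lst_agree[OF gI] siegL_prs_agree[OF gI S_alt]])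
  ultimately have ag: "agree ?I (mat_vec ?I g b) (Lev r (dl R) nu (Lev r p U (Sieg r S b)))"
    by (rule agree_trans)
  have "\<forall>i\<in>?I. beta i = mat_vec ?I g b i"
  proof
    fix i assume i: "i \<in> ?I"
    have io: "i \<in> idx_odd r" "i \<noteq> 0" using i by (auto simp: idx_even_def idx_odd_def)
    have "Lev r (dl R) nu (Lev r p U (Sieg r S b)) i = beta i"
    proof -
      have "Lev r (dl R) nu (Lev r p U (Sieg r S b)) i = Lev r (dl R) nu (Lev r p U (Sieg r S (b(0 := beta 0)))) i"
        using io by (simp add: Lev_apply Sieg_apply dotp_def dotn_def)
      also have "\<dots> = beta i"
        by (rule final_all) (use e0 io in auto)
      finally show ?thesis .
    qed
    then show "beta i = mat_vec ?I g b i" using ag i by (simp add: agree_def)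
  qed
  then show ?thesis using mem by blast
qed

lemma alt_diff: "alt r A \<Longrightarrow> alt r B \<Longrightarrow> alt r (\<lambda>x y. A x y - B x y)"
proof -
  assume a: "alt r A" and b: "alt r B"
  have "A x y - B x y = - (A y x - B y x)" if "1 \<le> x" "x \<le> int r" "1 \<le> y" "y \<le> int r" for x y
  proof -
    have "A x y = - A y x" "B x y = - B y x" using a b that unfolding alt_def by blast+
    then show ?thesis by simp
  qed
  moreover have "A x x - B x x = 0" for x using a b unfolding alt_def by simp
  ultimately show ?thesis unfolding alt_def by blast
qed

lemma gen0_mem: "i \<in> idx_even r \<Longrightarrow> transv0 i \<xi> \<in> EO_gens_odd r"
  unfolding EO_gens_odd_def by blast
lemma r0L_gens: "\<forall>j\<in>set js. 1 \<le> j \<and> j \<le> R \<Longrightarrow> set (r0L js \<xi>) \<subseteq> EO_gens_odd r"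
  unfolding r0L_def by (auto intro!: gen0_mem simp: idx_even_def)

theorem core_odd:
  assumes e0: "e0 = s * w 0 * (2 * b 0 + X * w 0)"
  shows "\<exists>g\<in>EO_le_odd r (r * (r - 1) div 2 + 9 * r - 5). \<forall>i\<in>idx_odd r. beta i = mat_vec (idx_odd r) g b i"
proof -
  let ?I = "idx_odd r"
  define Xi where "Xi = (\<lambda>j. - (T * w 0 * a j))"
  have gI: "goodI r ?I" by (rule goodI_odd)
  have z0: "0 \<in> ?I" by (simp add: idx_odd_def)
  have js: "\<forall>j\<in>set [1..R-1]. 1 \<le> j \<and> j \<le> R" by auto
  obtain Sa where Sa: "alt r Sa"
    and ag0: "agree ?I (ap ?I (r0L [1..R-1] Xi) b) (Sieg r Sa (R0 r (\<lambda>x. \<Sum>j\<leftarrow>[1..R-1]. Xi j * dl j x) b))"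
    using r0L_agree[OF gI z0 js, of Xi b] by blast
  have R0e: "R0 r (\<lambda>x. \<Sum>j\<leftarrow>[1..R-1]. Xi j * dl j x) b = R0 r Xi b"
  proof (rule R0_cong)
    fix k assume k: "1 \<le> k" "k \<le> R"
    have "(\<Sum>j\<leftarrow>[1..R-1]. Xi j * dl j k) = (if k \<in> set [1..R-1] then Xi k else 0)"
      by (rule sum_list_dl) simp
    also have "\<dots> = Xi k"
    proof (cases "k = R")
      case True then show ?thesis by (simp add: Xi_def aR)
    next
      case False then show ?thesis using k by simp
    qed
    finally show "(\<Sum>j\<leftarrow>[1..R-1]. Xi j * dl j k) = Xi k" .
  qed
  define S2 where "S2 = (\<lambda>x y. S x y - Sa x y)"
  have alt2: "alt r S2" unfolding S2_def by (rule alt_diff[OF S_alt Sa])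
  define ts where "ts = Lst @ siegL (prs r) S2 @ r0L [1..R-1] Xi"
  define g where "g = foldr (mat_mult ?I) ts idm"
  have len: "length ts = 7 * r - 3 + r * (r - 1) div 2 + (r - 1)" using R1
    by (simp add: ts_def Lst_length siegL_def prs_length r0L_def)
  have "length ts \<le> r * (r - 1) div 2 + 9 * r - 5" unfolding len using R1 by simp
  moreover have "set ts \<subseteq> EO_gens_odd r"
  proof -
    have ev_odd: "EO_gens_even r \<subseteq> EO_gens_odd r" by (simp add: EO_gens_odd_def)
    show ?thesis unfolding ts_def set_append using Lst_gens siegL_gens[of S2] r0L_gens[OF js, of Xi] ev_odd by blast
  qed
  ultimately have mem: "g \<in> EO_le_odd r (r * (r - 1) div 2 + 9 * r - 5)"
    unfolding EO_le_odd_def EO_le_def g_def by blast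
  have "agree ?I (mat_vec ?I g b) (ap ?I ts b)" unfolding g_def by (rule foldr_ap) (simp add: gI[unfolded goodI_def])
  moreover have "agree ?I (ap ?I ts b) (Lev r (dl R) nu (Lev r p U (Sieg r S2 (Sieg r Sa (R0 r Xi b)))))"
    unfolding ts_def
    by (rule ap_append_agree[OF Lst_agree[OF gI] ap_append_agree[OF siegL_prs_agree[OF gI alt2]]])
       (use ag0 R0e in simp)
  moreover have "Sieg r S2 (Sieg r Sa (R0 r Xi b)) = Sieg r S (R0 r Xi b)"
    by (simp add: Sieg_add S2_def)
  ultimately have ag: "agree ?I (mat_vec ?I g b) (Lev r (dl R) nu (Lev r p U (Sieg r S (R0 r Xi b))))"
    using agree_trans by metis
  have dX: "dotp r Xi b = - (T * w 0 * s)" by (simp add: Xi_def H1)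
  have "\<forall>i\<in>?I. beta i = mat_vec ?I g b i"
  proof
    fix i assume i: "i \<in> ?I"
    have "Lev r (dl R) nu (Lev r p U (Sieg r S (R0 r Xi b))) i = beta i"
    proof (rule final_all[OF _ _ _ i])
      show "\<And>k. 1 \<le> k \<Longrightarrow> k \<le> R \<Longrightarrow> R0 r Xi b k = b k" by (simp add: R0_apply)
      show "\<And>k. 1 \<le> k \<Longrightarrow> k \<le> R \<Longrightarrow> R0 r Xi b (-k) = b (-k) - s * z * e0 * a k"
        by (simp add: R0_apply dX) (simp add: Xi_def e0 T_def X_def algebra_simps power2_eq_square power3_eq_cube)
      show "R0 r Xi b 0 = beta 0"
        by (simp add: R0_apply dX beta_def T_def X_def algebra_simps power2_eq_square power3_eq_cube)
    qed
    then show "beta i = mat_vec ?I g b i" using ag i by (simp add: agree_def)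
  qed
  then show ?thesis using mem by blast
qed

end

definition C2 :: "'b::comm_ring_1 \<Rightarrow> 'b poly poly" where "C2 c = [:[:c:]:]"
definition Yv :: "'b::comm_ring_1 poly poly" where "Yv = [:[:0, 1:]:]"
definition Zv :: "'b::comm_ring_1 poly poly" where "Zv = [:0, 1:]"
definition G :: "'b::comm_ring_1 poly \<Rightarrow> 'b poly poly" where
  "G p = poly (map_poly C2 p) (Yv + Zv)"

lemma C2_0[simp]: "C2 0 = 0" by (simp add: C2_def)

lemma G_pCons: "G (pCons c p) = C2 c + (Yv + Zv) * G p"
  by (simp add: G_def map_poly_pCons)
lemma G_0[simp]: "G 0 = 0" by (simp add: G_def)
lemma G_const: "G [:c:] = C2 c" by (simp add: G_pCons)

lemma G_add: "G (p + q) = G p + G q"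
proof (induction p q rule: poly_induct2)
  case 0 then show ?case by simp
next
  case (pCons a p b q)
  have "C2 (a + b) = C2 a + C2 b" by (simp add: C2_def)
  then show ?case by (simp add: G_pCons pCons.IH algebra_simps)
qed

lemma G_smult: "G (smult a q) = C2 a * G q"
proof (induction q)
  case 0 then show ?case by simp
next
  case (pCons b q)
  have "C2 (a * b) = C2 a * C2 b" by (simp add: C2_def)
  then show ?case by (simp add: G_pCons pCons.IH algebra_simps)
qed

lemma G_mult: "G (p * q) = G p * G q"
proof (induction p)
  case 0 then show ?case by simp
next
  case (pCons a p)
  have "G (pCons a p * q) = G (smult a q + pCons 0 (p * q))" by simp
  also have "\<dots> = C2 a * G q + (Yv + Zv) * (G p * G q)" by (simp add: G_add G_smult G_pCons pCons.IH)
  also have "\<dots> = G (pCons a p) * G q" by (simp add: G_pCons algebra_simps)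
  finally show ?case .
qed

lemma G_sum: "G (\<Sum>j\<in>A. f j) = (\<Sum>j\<in>A. G (f j))"
  by (induction A rule: infinite_finite_induct) (simp_all add: G_add)

lemma G_diff: "G (p - q) = G p - G q"
  using G_add[of "p - q" q] by simp

lemma const_poly_power: "[:a:] ^ n = [:a ^ n:]"
  by (induction n) (simp_all add: mult.commute)

lemma poly0_G: "poly (G p) 0 = p"
proof (induction p)
  case 0 then show ?case by simp
next
  case (pCons a p)
  have "poly (G (pCons a p)) 0 = [:a:] + [:0, 1:] * p"
    by (simp add: G_pCons pCons.IH C2_def Yv_def Zv_def)
  also have "\<dots> = pCons a p" by (simp add: mult_pCons_left)
  finally show ?case .
qed

lemma pCons_Zv: "pCons a q = [:a:] + Zv * q"
  by (simp add: Zv_def mult_pCons_left)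

lemma G_split: "\<exists>Q. G p = [:p:] + Zv * Q"
proof -
  obtain a Q where e: "G p = pCons a Q" by (cases "G p") auto
  have "a = p" using poly0_G[of p] by (simp add: e)
  then show ?thesis using e pCons_Zv by metis
qed

definition W :: "'b::comm_ring_1 poly \<Rightarrow> 'b poly poly" where
  "W p = (SOME Q. G p = [:p:] + Zv * Q)"

lemma G_W: "G p = [:p:] + Zv * W p"
  unfolding W_def by (rule someI_ex[OF G_split])

lemma Zv_cancel: "Zv * Q = 0 \<Longrightarrow> Q = 0"
  by (simp add: Zv_def mult_pCons_left)

definition phi :: "'b::comm_ring_1 \<Rightarrow> nat \<Rightarrow> 'b poly poly \<Rightarrow> 'b poly poly" where
  "phi s m P = pcompose P [:0, [:s ^ m:]:]"

lemma phi_add: "phi s m (P + Q) = phi s m P + phi s m Q" by (simp add: phi_def pcompose_add)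
lemma phi_mult: "phi s m (P * Q) = phi s m P * phi s m Q" by (simp add: phi_def pcompose_mult)
lemma phi_const: "phi s m [:c:] = [:c:]" by (simp add: phi_def)
lemma phi_Zv: "phi s m Zv = [:0, [:s ^ m:]:]" by (simp add: phi_def Zv_def pcompose_pCons)
lemma phi_0: "phi s m 0 = 0" by (simp add: phi_def)
lemma phi_sum: "phi s m (\<Sum>j\<in>A. f j) = (\<Sum>j\<in>A. phi s m (f j))"
  by (induction A rule: infinite_finite_induct) (simp_all add: phi_add phi_0)

lemma subst_phi: "subst_yz s m p = phi s m (G p)"
proof (induction p)
  case 0 then show ?case by (simp add: subst_yz_def phi_def)
next
  case (pCons a p)
  have "subst_yz s m (pCons a p) = C2 a + ([:[:0, 1:]:] + [:0, [:s ^ m:]:]) * subst_yz s m p"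
    by (simp add: subst_yz_def map_poly_pCons C2_def)
  also have "\<dots> = phi s m (G (pCons a p))"
    by (simp add: G_pCons phi_add phi_mult phi_const phi_Zv pCons.IH C2_def Yv_def)
  finally show ?case .
qed

lemma subst_W: "subst_yz s m p = [:p:] + [:0, [:s ^ m:]:] * phi s m (W p)"
  by (simp add: subst_phi G_W phi_add phi_mult phi_const phi_Zv)

lemma Xv_eq: "(C2 s) ^ 3 * Zv = [:0, [:s ^ 3:]:]"
  by (simp add: C2_def Zv_def const_poly_power mult_pCons_right)

lemma ideal_gen_sum:
  fixes f :: "'i \<Rightarrow> 'a::comm_ring_1"
  assumes "finite Gs" "Gs \<subseteq> f ` I" "finite I"
  shows "\<exists>a. (\<Sum>g\<in>Gs. c g * g) = (\<Sum>i\<in>I. a i * f i)"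
  using assms
proof (induction Gs rule: finite_induct)
  case empty then show ?case by (intro exI[of _ "\<lambda>i. 0"]) simp
next
  case (insert g Gs)
  obtain a where a: "(\<Sum>g\<in>Gs. c g * g) = (\<Sum>i\<in>I. a i * f i)" using insert by auto
  obtain i0 where i0: "i0 \<in> I" "g = f i0" using insert by auto
  define a' where "a' = (\<lambda>i. a i + (if i = i0 then c g else 0))"
  have "(\<Sum>i\<in>I. a' i * f i) = (\<Sum>i\<in>I. a i * f i + (if i = i0 then c g * f i else 0))"
    by (rule sum.cong) (auto simp: a'_def algebra_simps)
  also have "\<dots> = (\<Sum>i\<in>I. a i * f i) + c g * g" using insert.prems i0 by (simp add: sum.distrib)
  finally show ?case using insert a by (intro exI[of _ a']) (simp add: add.commute)
qed

lemma ideal_coeffs: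
  fixes f :: "'i \<Rightarrow> 'a::comm_ring_1"
  assumes "x \<in> ideal_gen (f ` I)" "finite I"
  shows "\<exists>a. (\<Sum>i\<in>I. a i * f i) = x"
proof -
  obtain Gs c where "finite Gs" "Gs \<subseteq> f ` I" "x = (\<Sum>g\<in>Gs. c g * g)"
    using assms(1) unfolding ideal_gen_def by blast
  then show ?thesis using ideal_gen_sum[of Gs f I c] assms(2) by metis
qed

lemma pconst_sum: "(\<Sum>k\<in>A. [:f k:]) = [:\<Sum>k\<in>A. f k:]"
  by (induction A rule: infinite_finite_induct) simp_all

lemma G_prod: "G (x * y) = [:x * y:] + Zv * (W x * [:y:] + [:x:] * W y + Zv * W x * W y)"
proof -
  have "G (x * y) = ([:x:] + Zv * W x) * ([:y:] + Zv * W y)" by (subst G_mult) (simp only: G_W)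
  also have "\<dots> = [:x * y:] + Zv * (W x * [:y:] + [:x:] * W y + Zv * W x * W y)"
    by (simp add: algebra_simps)
  finally show ?thesis .
qed

lemma Zv_cancel2: "Zv * P = Zv * Q \<Longrightarrow> P = Q"
  using Zv_cancel[of "P - Q"] by (simp add: right_diff_distrib)

lemma W_const: "W [:c:] = 0"
proof -
  have "G [:c:] = [:[:c:]:] + Zv * 0" by (simp add: G_const C2_def)
  then have "Zv * W [:c:] = Zv * 0" using G_W[of "[:c:]"] by simp
  then show ?thesis by (rule Zv_cancel2)
qed

lemma G_sum_prod: "G (\<Sum>j\<in>J. f j * g j) = [:\<Sum>j\<in>J. f j * g j:] + Zv * (\<Sum>j\<in>J. W (f j) * [:g j:] + [:f j:] * W (g j) + Zv * W (f j) * W (g j))"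
proof -
  have "G (\<Sum>j\<in>J. f j * g j) = (\<Sum>j\<in>J. G (f j * g j))" by (rule G_sum)
  also have "\<dots> = (\<Sum>j\<in>J. [:f j * g j:] + Zv * (W (f j) * [:g j:] + [:f j:] * W (g j) + Zv * W (f j) * W (g j)))"
    by (simp only: G_prod)
  also have "\<dots> = (\<Sum>j\<in>J. [:f j * g j:]) + Zv * (\<Sum>j\<in>J. W (f j) * [:g j:] + [:f j:] * W (g j) + Zv * W (f j) * W (g j))"
    by (simp add: sum.distrib sum_distrib_left distrib_left)
  finally show ?thesis by (simp only: pconst_sum)
qed

lemma rel_sum:
  assumes "(\<Sum>j\<in>J. f j * g j) = [:c:]"
  shows "(\<Sum>j\<in>J. W (f j) * [:g j:] + [:f j:] * W (g j) + Zv * W (f j) * W (g j)) = 0"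
proof -
  have "G (\<Sum>j\<in>J. f j * g j) = [:\<Sum>j\<in>J. f j * g j:] + Zv * 0"
    unfolding assms G_const C2_def by simp
  then have "Zv * (\<Sum>j\<in>J. W (f j) * [:g j:] + [:f j:] * W (g j) + Zv * W (f j) * W (g j)) = Zv * 0"
    unfolding G_sum_prod by simp
  then show ?thesis by (rule Zv_cancel2)
qed

lemma rel_sum_odd:
  assumes "x * x + (\<Sum>j\<in>J. f j * g j) = 0"
  shows "(W x * [:x:] + [:x:] * W x + Zv * W x * W x) + (\<Sum>j\<in>J. W (f j) * [:g j:] + [:f j:] * W (g j) + Zv * W (f j) * W (g j)) = 0"
proof -
  define Ex where "Ex = W x * [:x:] + [:x:] * W x + Zv * W x * W x"
  define ES where "ES = (\<Sum>j\<in>J. W (f j) * [:g j:] + [:f j:] * W (g j) + Zv * W (f j) * W (g j))"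
  define S where "S = (\<Sum>j\<in>J. f j * g j)"
  have "G (x * x + S) = [:x * x:] + Zv * Ex + ([:S:] + Zv * ES)"
    unfolding G_add S_def G_sum_prod G_prod Ex_def ES_def ..
  also have "\<dots> = [:x * x + S:] + Zv * (Ex + ES)" by (simp add: distrib_left add_ac)
  finally have "G (x * x + S) = [:x * x + S:] + Zv * (Ex + ES)" .
  moreover have "G (x * x + S) = [:x * x + S:] + Zv * 0" using assms by (simp add: S_def)
  ultimately have "Zv * (Ex + ES) = Zv * 0" by simp
  then have "Ex + ES = 0" by (rule Zv_cancel2)
  then show ?thesis by (simp add: Ex_def ES_def)
qed

lemma dotp_restrict: "L \<subseteq> {1..int r} \<Longrightarrow> dotp r (\<lambda>k. if k \<in> L then F k else 0) Y = (\<Sum>k\<in>L. F k * Y k)"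
proof -
  assume L: "L \<subseteq> {1..int r}"
  have "dotp r (\<lambda>k. if k \<in> L then F k else 0) Y = (\<Sum>k\<in>{1..int r}. if k \<in> L then F k * Y k else 0)"
    unfolding dotp_def by (rule sum.cong) auto
  also have "\<dots> = (\<Sum>k\<in>{1..int r} \<inter> L. F k * Y k)" by (rule sum.inter_restrict[symmetric]) simp
  also have "{1..int r} \<inter> L = L" using L by auto
  finally show ?thesis .
qed

lemma phi_rel: "phi s m (W x * [:y:] + [:x:] * W y + Zv * W x * W y) =
   phi s m (W x) * [:y:] + [:x:] * phi s m (W y) + [:0, [:s ^ m:]:] * phi s m (W x) * phi s m (W y)"
  by (simp only: phi_add phi_mult phi_const phi_Zv)

theorem lemma12_even:
  fixes r :: nat and b :: "'b::comm_ring_1 poly vec" and s :: 'b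
  assumes r3: "r \<ge> 3" and bI: "b \<in> IUm_even r" and sI: "[:s:] \<in> ideal_gen (b ` {1..int r - 1})"
  shows "\<exists>m::nat. \<exists>g \<in> EO_le_even r (r * (r - 1) div 2 + 8 * r - 4).
               \<forall>i\<in>idx_even r. subst_yz s m (b i) = mat_vec (idx_even r) g (\<lambda>k. [:b k:]) i"
proof -
  define L where "L = {1..int r - 1}"
  obtain a0 where a0: "(\<Sum>i\<in>L. a0 i * b i) = [:s:]" using ideal_coeffs[OF sI] by (auto simp: L_def)
  have q: "(\<Sum>i\<in>{1..int r}. b i * b (-i)) = [:0:]" using bI by (simp add: IUm_even_def q_even_def)
  define aR where "aR = (\<lambda>k. if k \<in> L then [:a0 k:] else 0)"
  define a2R where "a2R = (\<lambda>k. if k \<in> L then phi s 3 (W (a0 k)) else 0)"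
  define bR :: "'b poly poly vec" where "bR = (\<lambda>k. [:b k:])"
  define wR where "wR = (\<lambda>k. phi s 3 (W (b k)))"
  define Xv :: "'b poly poly" where "Xv = [:0, [:s ^ 3:]:]"
  have LL: "L \<subseteq> {1..int r}" by (auto simp: L_def)
  have H1: "dotp r aR bR = C2 s"
  proof -
    have "dotp r aR bR = (\<Sum>k\<in>L. [:a0 k:] * [:b k:])" unfolding aR_def bR_def dotp_restrict[OF LL] ..
    also have "\<dots> = (\<Sum>k\<in>L. [:a0 k * b k:])" by (rule sum.cong) simp_all
    also have "\<dots> = [:\<Sum>k\<in>L. a0 k * b k:]" by (rule pconst_sum)
    also have "\<dots> = C2 s" unfolding a0 C2_def ..
    finally show ?thesis .
  qed
  have H4: "dotp r a2R bR + dotp r aR wR + C2 s ^ 3 * Zv * dotp r a2R wR = 0"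
  proof -
    have r4: "(\<Sum>j\<in>L. W (a0 j) * [:b j:] + [:a0 j:] * W (b j) + Zv * W (a0 j) * W (b j)) = 0"
      by (rule rel_sum[OF a0])
    have "phi s 3 (\<Sum>j\<in>L. W (a0 j) * [:b j:] + [:a0 j:] * W (b j) + Zv * W (a0 j) * W (b j)) =
      (\<Sum>j\<in>L. phi s 3 (W (a0 j)) * [:b j:] + [:a0 j:] * phi s 3 (W (b j)) + Xv * phi s 3 (W (a0 j)) * phi s 3 (W (b j)))"
      unfolding phi_sum phi_rel Xv_def ..
    then have e: "(\<Sum>j\<in>L. phi s 3 (W (a0 j)) * [:b j:] + [:a0 j:] * phi s 3 (W (b j)) + Xv * phi s 3 (W (a0 j)) * phi s 3 (W (b j))) = 0"
      using r4 by (simp add: phi_0)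
    have "dotp r a2R bR + dotp r aR wR + C2 s ^ 3 * Zv * dotp r a2R wR =
       (\<Sum>j\<in>L. phi s 3 (W (a0 j)) * [:b j:] + [:a0 j:] * phi s 3 (W (b j)) + Xv * phi s 3 (W (a0 j)) * phi s 3 (W (b j)))"
      unfolding aR_def a2R_def dotp_restrict[OF LL] Xv_eq Xv_def[symmetric]
      by (simp add: bR_def wR_def sum.distrib sum_distrib_left mult.assoc)
    then show ?thesis using e by simp
  qed
  have HE: "C2 s * (dotn r bR wR + dotn r wR bR + C2 s ^ 3 * Zv * dotn r wR wR) + 0 = 0"
  proof -
    have r3': "(\<Sum>j\<in>{1..int r}. W (b j) * [:b (-j):] + [:b j:] * W (b (-j)) + Zv * W (b j) * W (b (-j))) = 0"
      by (rule rel_sum[OF q])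
    have "phi s 3 (\<Sum>j\<in>{1..int r}. W (b j) * [:b (-j):] + [:b j:] * W (b (-j)) + Zv * W (b j) * W (b (-j))) =
      (\<Sum>j\<in>{1..int r}. phi s 3 (W (b j)) * [:b (-j):] + [:b j:] * phi s 3 (W (b (-j))) + Xv * phi s 3 (W (b j)) * phi s 3 (W (b (-j))))"
      unfolding phi_sum phi_rel Xv_def ..
    then have e: "(\<Sum>j\<in>{1..int r}. phi s 3 (W (b j)) * [:b (-j):] + [:b j:] * phi s 3 (W (b (-j))) + Xv * phi s 3 (W (b j)) * phi s 3 (W (b (-j)))) = 0"
      using r3' by (simp add: phi_0)
    have "dotn r bR wR + dotn r wR bR + C2 s ^ 3 * Zv * dotn r wR wR =
      (\<Sum>j\<in>{1..int r}. phi s 3 (W (b j)) * [:b (-j):] + [:b j:] * phi s 3 (W (b (-j))) + Xv * phi s 3 (W (b j)) * phi s 3 (W (b (-j))))"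
      unfolding Xv_eq Xv_def[symmetric] dotn_def
      by (simp add: bR_def wR_def sum.distrib sum_distrib_left mult_ac)
    then show ?thesis using e by simp
  qed
  have aR0: "aR (int r) = 0" by (simp add: aR_def L_def)
  have a2R0: "a2R (int r) = 0" by (simp add: a2R_def L_def)
  interpret c: core r "C2 s" Zv 0 bR wR aR a2R
    by (unfold_locales) (use r3 aR0 a2R0 H1 H4 HE in auto)
  obtain g where g: "g \<in> EO_le_even r (r * (r - 1) div 2 + 8 * r - 4)"
    and gi: "\<forall>i\<in>idx_even r. c.beta i = mat_vec (idx_even r) g bR i"
    using c.core_even by blast
  have "\<forall>i\<in>idx_even r. subst_yz s 3 (b i) = mat_vec (idx_even r) g (\<lambda>k. [:b k:]) i"
  proof
    fix i assume i: "i \<in> idx_even r"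
    have "subst_yz s 3 (b i) = bR i + c.X * wR i"
      by (simp add: subst_W bR_def wR_def c.X_def Xv_eq)
    also have "\<dots> = c.beta i" by (simp add: c.beta_def)
    also have "\<dots> = mat_vec (idx_even r) g (\<lambda>k. [:b k:]) i" using gi i by (simp add: bR_def)
    finally show "subst_yz s 3 (b i) = mat_vec (idx_even r) g (\<lambda>k. [:b k:]) i" .
  qed
  then show ?thesis using g by blast
qed

theorem lemma12_odd:
  fixes r :: nat and b :: "'b::comm_ring_1 poly vec" and s :: 'b
  assumes r3: "r \<ge> 3" and bI: "b \<in> IUm_odd r" and sI: "[:s:] \<in> ideal_gen (b ` {1..int r - 1})"
  shows "\<exists>m::nat. \<exists>g \<in> EO_le_odd r (r * (r - 1) div 2 + 9 * r - 5).
               \<forall>i\<in>idx_odd r. subst_yz s m (b i) = mat_vec (idx_odd r) g (\<lambda>k. [:b k:]) i"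
proof -
  define L where "L = {1..int r - 1}"
  obtain a0 where a0: "(\<Sum>i\<in>L. a0 i * b i) = [:s:]" using ideal_coeffs[OF sI] by (auto simp: L_def)
  have q: "b 0 * b 0 + (\<Sum>i\<in>{1..int r}. b i * b (-i)) = 0" using bI by (simp add: IUm_odd_def q_odd_def power2_eq_square)
  define aR where "aR = (\<lambda>k. if k \<in> L then [:a0 k:] else 0)"
  define a2R where "a2R = (\<lambda>k. if k \<in> L then phi s 3 (W (a0 k)) else 0)"
  define bR :: "'b poly poly vec" where "bR = (\<lambda>k. [:b k:])"
  define wR where "wR = (\<lambda>k. phi s 3 (W (b k)))"
  define Xv :: "'b poly poly" where "Xv = [:0, [:s ^ 3:]:]"
  have LL: "L \<subseteq> {1..int r}" by (auto simp: L_def)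
  have H1: "dotp r aR bR = C2 s"
  proof -
    have "dotp r aR bR = (\<Sum>k\<in>L. [:a0 k:] * [:b k:])" unfolding aR_def bR_def dotp_restrict[OF LL] ..
    also have "\<dots> = (\<Sum>k\<in>L. [:a0 k * b k:])" by (rule sum.cong) simp_all
    also have "\<dots> = [:\<Sum>k\<in>L. a0 k * b k:]" by (rule pconst_sum)
    also have "\<dots> = C2 s" unfolding a0 C2_def ..
    finally show ?thesis .
  qed
  have H4: "dotp r a2R bR + dotp r aR wR + C2 s ^ 3 * Zv * dotp r a2R wR = 0"
  proof -
    have r4: "(\<Sum>j\<in>L. W (a0 j) * [:b j:] + [:a0 j:] * W (b j) + Zv * W (a0 j) * W (b j)) = 0"
      by (rule rel_sum[OF a0])
    have "phi s 3 (\<Sum>j\<in>L. W (a0 j) * [:b j:] + [:a0 j:] * W (b j) + Zv * W (a0 j) * W (b j)) =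
      (\<Sum>j\<in>L. phi s 3 (W (a0 j)) * [:b j:] + [:a0 j:] * phi s 3 (W (b j)) + Xv * phi s 3 (W (a0 j)) * phi s 3 (W (b j)))"
      unfolding phi_sum phi_rel Xv_def ..
    then have e: "(\<Sum>j\<in>L. phi s 3 (W (a0 j)) * [:b j:] + [:a0 j:] * phi s 3 (W (b j)) + Xv * phi s 3 (W (a0 j)) * phi s 3 (W (b j))) = 0"
      using r4 by (simp add: phi_0)
    have "dotp r a2R bR + dotp r aR wR + C2 s ^ 3 * Zv * dotp r a2R wR =
       (\<Sum>j\<in>L. phi s 3 (W (a0 j)) * [:b j:] + [:a0 j:] * phi s 3 (W (b j)) + Xv * phi s 3 (W (a0 j)) * phi s 3 (W (b j)))"
      unfolding aR_def a2R_def dotp_restrict[OF LL] Xv_eq Xv_def[symmetric]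
      by (simp add: bR_def wR_def sum.distrib sum_distrib_left mult.assoc)
    then show ?thesis using e by simp
  qed
  define e0 where "e0 = C2 s * wR 0 * (2 * bR 0 + C2 s ^ 3 * Zv * wR 0)"
  have HE: "C2 s * (dotn r bR wR + dotn r wR bR + C2 s ^ 3 * Zv * dotn r wR wR) + e0 = 0"
  proof -
    define E0 where "E0 = W (b 0) * [:b 0:] + [:b 0:] * W (b 0) + Zv * W (b 0) * W (b 0)"
    define E0' where "E0' = phi s 3 (W (b 0)) * [:b 0:] + [:b 0:] * phi s 3 (W (b 0)) + Xv * phi s 3 (W (b 0)) * phi s 3 (W (b 0))"
    define ES where "ES = (\<Sum>j\<in>{1..int r}. W (b j) * [:b (-j):] + [:b j:] * W (b (-j)) + Zv * W (b j) * W (b (-j)))"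
    define ES' where "ES' = (\<Sum>j\<in>{1..int r}. phi s 3 (W (b j)) * [:b (-j):] + [:b j:] * phi s 3 (W (b (-j))) + Xv * phi s 3 (W (b j)) * phi s 3 (W (b (-j))))"
    have r3': "E0 + ES = 0" unfolding E0_def ES_def by (rule rel_sum_odd[OF q])
    have "phi s 3 (E0 + ES) = E0' + ES'"
      unfolding E0_def ES_def E0'_def ES'_def Xv_def by (simp only: phi_add phi_sum phi_mult phi_const phi_Zv)
    then have e: "E0' + ES' = 0" using r3' by (simp add: phi_0)
    have d: "dotn r bR wR + dotn r wR bR + C2 s ^ 3 * Zv * dotn r wR wR = ES'"
      unfolding Xv_eq Xv_def[symmetric] dotn_def ES'_def
      by (simp add: bR_def wR_def sum.distrib sum_distrib_left mult_ac)
    have e0e: "e0 = C2 s * E0'"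
      unfolding e0_def Xv_eq Xv_def[symmetric] E0'_def by (simp add: bR_def wR_def algebra_simps)
    have "C2 s * (dotn r bR wR + dotn r wR bR + C2 s ^ 3 * Zv * dotn r wR wR) + e0 = C2 s * (E0' + ES')"
      unfolding d e0e by (simp add: distrib_left)
    then show ?thesis unfolding e by simp
  qed
  have aR0: "aR (int r) = 0" by (simp add: aR_def L_def)
  have a2R0: "a2R (int r) = 0" by (simp add: a2R_def L_def)
  interpret c: core r "C2 s" Zv e0 bR wR aR a2R
    by (unfold_locales) (use r3 aR0 a2R0 H1 H4 HE in auto)
  obtain g where g: "g \<in> EO_le_odd r (r * (r - 1) div 2 + 9 * r - 5)"
    and gi: "\<forall>i\<in>idx_odd r. c.beta i = mat_vec (idx_odd r) g bR i"
    using c.core_odd[OF e0_def[unfolded c.X_def[symmetric]]] by blast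
  have "\<forall>i\<in>idx_odd r. subst_yz s 3 (b i) = mat_vec (idx_odd r) g (\<lambda>k. [:b k:]) i"
  proof
    fix i assume i: "i \<in> idx_odd r"
    have "subst_yz s 3 (b i) = bR i + c.X * wR i"
      by (simp add: subst_W bR_def wR_def c.X_def Xv_eq)
    also have "\<dots> = c.beta i" by (simp add: c.beta_def)
    also have "\<dots> = mat_vec (idx_odd r) g (\<lambda>k. [:b k:]) i" using gi i by (simp add: bR_def)
    finally show "subst_yz s 3 (b i) = mat_vec (idx_odd r) g (\<lambda>k. [:b k:]) i" .
  qed
  then show ?thesis using g by blast
qed


theorem lemma12:
  fixes r :: nat
  assumes "noetherian TYPE('b::comm_ring_1)"
    and "r \<ge> 3"
  shows "(\<forall>(b :: 'b poly vec) (s :: 'b).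
            b \<in> IUm_even r \<and> [:s:] \<in> ideal_gen (b ` {1..int r - 1}) \<longrightarrow>
            (\<exists>m::nat. \<exists>g \<in> EO_le_even r (r * (r - 1) div 2 + 8 * r - 4).
               \<forall>i\<in>idx_even r. subst_yz s m (b i) = mat_vec (idx_even r) g (\<lambda>k. [:b k:]) i))
       \<and> (\<forall>(b :: 'b poly vec) (s :: 'b).
            b \<in> IUm_odd r \<and> [:s:] \<in> ideal_gen (b ` {1..int r - 1}) \<longrightarrow>
            (\<exists>m::nat. \<exists>g \<in> EO_le_odd r (r * (r - 1) div 2 + 9 * r - 5).
               \<forall>i\<in>idx_odd r. subst_yz s m (b i) = mat_vec (idx_odd r) g (\<lambda>k. [:b k:]) i))"
  using lemma12_even[OF assms(2)] lemma12_odd[OF assms(2)] by blast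

end
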